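(* Let $\Phi$ be an $L$-layer ReLU network with weights $W^{(i)}\in\mathbb R^{N_{i-1}\times N_i}$, data $X\in\mathbb R^{m\times N_0}$, alphabet $\mathcal A=\mathcal A_\infty^\delta$, and $p\in\mathbb N$. Let $\Phi(X)=X^{(L)}$ and $\widetilde\Phi(X)=\widetilde X^{(L)}$. (a) If $\Phi$ is quantized by Algorithm 1, then with probability at least $1-\sum_{i=1}^L\sqrt2\,mN_i/N_{i-1}^p$, $$\max_{1\le j\le N_L}\|\Phi(X)_j-\widetilde\Phi(X)_j\|_2\le\sum_{i=0}^{L-1}(2\pi pm\delta^2)^{\frac{L-i}{2}}\Bigl(\prod_{k=i}^{L-1}\log N_k\Bigr)^{1/2}\max_{1\le j\le N_i}\|X^{(i)}_j\|_2.$$ (b) If $\Phi$ is quantized by Algorithm 2 with order $r$, then with probability at least $1-\sum_{i=1}^L\sqrt2\,mN_i/N_{i-1}^p$, $$\max_{1\le j\le N_L}\|\Phi(X)_j-\widetilde\Phi(X)_j\|_2\le\sum_{i=0}^{L-1}\delta\sqrt{2\pi pm\log N_i}\max_{1\le j\le N_i}\|X^{(i)}_j\|_2\prod_{k=i+1}^{L-1}\Bigl(N_k\|W^{(k+1)}\|_{\max}\|P^{(k)}\|_2^{r-1}+\delta\sqrt{2\pi pm\log N_k}\Bigr),$$ where $P^{(k)}:=P_{\widetilde X^{(k)\perp}_{N_k}}\cdots P_{\widetilde X^{(k)\perp}_{1}}$.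
   Context: $\rho(x)=\max\{0,x\}$ acts entrywise. For data $X\in\mathbb R^{m\times N_0}$ (data points as rows): $X^{(0)}=X$, $X^{(i)}=\rho(X^{(i-1)}W^{(i)})$; for quantized weights $Q^{(i)}$: $\widetilde X^{(0)}=X$, $\widetilde X^{(i)}=\rho(\widetilde X^{(i-1)}Q^{(i)})$. $A_j$ is the $j$-th column of $A$, $\|A\|_{\max}=\max_{k,l}|A_{kl}|$; columns of $\widetilde X^{(i)}$ are assumed nonzero; $P_{z^\perp}=I-zz^\top/\|z\|_2^2$. $\mathcal A_\infty^\delta=\{k\delta:k\in\mathbb Z\}$; $\mathcal Q_{\mathrm{StocQ}}(z)$ equals $\lfloor z/\delta\rfloor\delta$ with probability $1-z/\delta+\lfloor z/\delta\rfloor$ and $(\lfloor z/\delta\rfloor+1)\delta$ otherwise, with fresh independent randomness at each call. Phase II for a vector $\widetilde w\in\mathbb R^{N}$ and data $\widetilde Y\in\mathbb R^{m\times N}$: $\widetilde u_0=0$, $\widetilde q_t=\mathcal Q_{\mathrm{StocQ}}(\widetilde w_t+\langle\widetilde Y_t,\widetilde u_{t-1}\rangle/\|\widetilde Y_t\|_2^2)$, $\widetilde u_t=\widetilde u_{t-1}+(\widetilde w_t-\widetilde q_t)\widetilde Y_t$, $t=1,\dots,N$. Perfect alignment: given $Y,\widetilde Y,w$, $\widetilde w$ is a minimizer of $\|z\|_\infty$ subject to $\widetilde Yz=Yw$ (assumed feasible). Order-$r$ alignment: $\hat u_0=0$; for $t=1,\dots,N$, $\widetilde w_t=\langle\widetilde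 Y_t,\hat u_{t-1}+w_tY_t\rangle/\|\widetilde Y_t\|_2^2$, $\hat u_t=\hat u_{t-1}+w_tY_t-\widetilde w_t\widetilde Y_t$; for $t=N+1,\dots,rN$ (indices of $w,\widetilde w,Y,\widetilde Y$ mod $N$), $\hat v_{t-1}=\hat u_{t-1}-w_tY_t+\widetilde w_t\widetilde Y_t$, $\widetilde w_t\leftarrow\langle\widetilde Y_t,\hat v_{t-1}+w_tY_t\rangle/\|\widetilde Y_t\|_2^2$, $\hat u_t=\hat v_{t-1}+w_tY_t-\widetilde w_t\widetilde Y_t$. Algorithm 1: for $i=1,\dots,L$, with $Y=X^{(i-1)},\widetilde Y=\widetilde X^{(i-1)}$, for each column $w=W^{(i)}_j$ compute $\widetilde w$ by perfect alignment, run Phase II on $\widetilde w$ with data $\widetilde Y$, and set $Q^{(i)}_j=\widetilde q$. Algorithm 2: the same with order-$r$ alignment in place of perfect alignment. *)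

theory Defs
  imports "HOL-Probability.Probability"
begin

text \<open>Matrices are functions nat => nat => real (row index, column index) with explicit
  dimensions; only entries inside the stated dimensions are ever read.  All indices are 0-based.\<close>

type_synonym mat = "nat \<Rightarrow> nat \<Rightarrow> real"
type_synonym vec = "nat \<Rightarrow> real"

definition relu :: "real \<Rightarrow> real" where
  "relu x = max 0 x"

definition vnorm :: "nat \<Rightarrow> vec \<Rightarrow> real" where
  "vnorm m x = sqrt (\<Sum>k<m. (x k)\<^sup>2)"

definition col :: "mat \<Rightarrow> nat \<Rightarrow> vec" where
  "col A j = (\<lambda>k. A k j)"

definition max_col_norm :: "nat \<Rightarrow> nat \<Rightarrow> mat \<Rightarrow> real" where
  "max_col_norm m n A = Max ((\<lambda>j. vnorm m (col A j)) ` {..<n})"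

definition max_abs :: "nat \<Rightarrow> nat \<Rightarrow> mat \<Rightarrow> real" where
  "max_abs a b A = Max ((\<lambda>(k,l). \<bar>A k l\<bar>) ` ({..<a} \<times> {..<b}))"

definition linf :: "nat \<Rightarrow> vec \<Rightarrow> real" where
  "linf n z = Max (insert 0 ((\<lambda>j. \<bar>z j\<bar>) ` {..<n}))"

definition matmul :: "nat \<Rightarrow> mat \<Rightarrow> mat \<Rightarrow> mat" where
  "matmul n A B = (\<lambda>k l. \<Sum>j<n. A k j * B j l)"

definition opnorm2 :: "nat \<Rightarrow> mat \<Rightarrow> real" where
  "opnorm2 m P = Sup {vnorm m (\<lambda>k. \<Sum>l<m. P k l * x l) | x. vnorm m x \<le> 1}"

definition proj_perp :: "nat \<Rightarrow> vec \<Rightarrow> mat" where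
  "proj_perp m z = (\<lambda>k l. (if k = l then 1 else 0) - z k * z l / (\<Sum>i<m. (z i)\<^sup>2))"

text \<open>prod_proj m Y n = P_{Y_n perp} ... P_{Y_1 perp} (in 1-based column numbering).\<close>
primrec prod_proj :: "nat \<Rightarrow> mat \<Rightarrow> nat \<Rightarrow> mat" where
  "prod_proj m Y 0 = (\<lambda>k l. if k = l then 1 else 0)"
| "prod_proj m Y (Suc j) = matmul m (proj_perp m (col Y j)) (prod_proj m Y j)"

text \<open>Forward pass: fwd m N W X i = X^{(i)} (m x N i), with W (Suc i) the weight matrix of layer
  Suc i (of size N i x N (Suc i)).\<close>
primrec fwd :: "nat \<Rightarrow> (nat \<Rightarrow> nat) \<Rightarrow> (nat \<Rightarrow> mat) \<Rightarrow> mat \<Rightarrow> nat \<Rightarrow> mat" where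
  "fwd m N W X 0 = X"
| "fwd m N W X (Suc i) = (\<lambda>k l. relu (\<Sum>j<N i. fwd m N W X i k j * W (Suc i) j l))"

text \<open>Stochastic quantizer onto the infinite alphabet {k delta}: rounds down with probability
  1 - z/delta + floor(z/delta), up otherwise.\<close>
definition stocq :: "real \<Rightarrow> real \<Rightarrow> real pmf" where
  "stocq \<delta> z = map_pmf
     (\<lambda>b. if b then (of_int \<lfloor>z / \<delta>\<rfloor> + 1) * \<delta> else of_int \<lfloor>z / \<delta>\<rfloor> * \<delta>)
     (bernoulli_pmf (z / \<delta> - of_int \<lfloor>z / \<delta>\<rfloor>))"

text \<open>Phase II: after t steps, returns (q, u_t) where q j (j < t) are the quantized entries.\<close>
primrec phase2_steps :: "real \<Rightarrow> nat \<Rightarrow> mat \<Rightarrow> vec \<Rightarrow> nat \<Rightarrow> (vec \<times> vec) pmf" where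
  "phase2_steps \<delta> m Yt w 0 = return_pmf (\<lambda>_. 0, \<lambda>_. 0)"
| "phase2_steps \<delta> m Yt w (Suc t) =
     bind_pmf (phase2_steps \<delta> m Yt w t) (\<lambda>(q, u).
       map_pmf (\<lambda>qt. (q(t := qt), \<lambda>k. u k + (w t - qt) * Yt k t))
         (stocq \<delta> (w t + (\<Sum>k<m. Yt k t * u k) / (\<Sum>k<m. (Yt k t)\<^sup>2))))"

definition phase2 :: "real \<Rightarrow> nat \<Rightarrow> nat \<Rightarrow> mat \<Rightarrow> vec \<Rightarrow> vec pmf" where
  "phase2 \<delta> m n Yt w = map_pmf fst (phase2_steps \<delta> m Yt w n)"

text \<open>Quantize the first c columns of a layer independently: wcols j is the (aligned) column j.\<close>
primrec layer_q :: "real \<Rightarrow> nat \<Rightarrow> nat \<Rightarrow> mat \<Rightarrow> (nat \<Rightarrow> vec) \<Rightarrow> nat \<Rightarrow> mat pmf" where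
  "layer_q \<delta> m n Yt wcols 0 = return_pmf (\<lambda>_ _. 0)"
| "layer_q \<delta> m n Yt wcols (Suc c) =
     bind_pmf (layer_q \<delta> m n Yt wcols c) (\<lambda>M.
       map_pmf (\<lambda>q. (\<lambda>l j. if j = c then q l else M l j)) (phase2 \<delta> m n Yt (wcols c)))"

text \<open>Layer-by-layer quantization with a given alignment rule al n Y Yt w (n = number of columns
  of Y and Yt).  qnet ... i returns the random quantized weights Q (Q k for k = 1..i).\<close>
primrec qnet :: "real \<Rightarrow> nat \<Rightarrow> (nat \<Rightarrow> nat) \<Rightarrow> (nat \<Rightarrow> mat) \<Rightarrow> mat
    \<Rightarrow> (nat \<Rightarrow> mat \<Rightarrow> mat \<Rightarrow> vec \<Rightarrow> vec) \<Rightarrow> nat \<Rightarrow> (nat \<Rightarrow> mat) pmf" where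
  "qnet \<delta> m N W X al 0 = return_pmf (\<lambda>_ _ _. 0)"
| "qnet \<delta> m N W X al (Suc i) =
     bind_pmf (qnet \<delta> m N W X al i) (\<lambda>Q.
       map_pmf (\<lambda>M. Q(Suc i := M))
         (layer_q \<delta> m (N i) (fwd m N Q X i)
            (\<lambda>j. al (N i) (fwd m N W X i) (fwd m N Q X i) (col (W (Suc i)) j)) (N (Suc i))))"

definition align_feasible :: "nat \<Rightarrow> nat \<Rightarrow> mat \<Rightarrow> mat \<Rightarrow> vec \<Rightarrow> vec \<Rightarrow> bool" where
  "align_feasible m n Y Yt w z \<longleftrightarrow> (\<forall>j\<ge>n. z j = 0) \<and>
      (\<forall>k<m. (\<Sum>j<n. Yt k j * z j) = (\<Sum>j<n. Y k j * w j))"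

definition perfect_aligned :: "nat \<Rightarrow> nat \<Rightarrow> mat \<Rightarrow> mat \<Rightarrow> vec \<Rightarrow> vec \<Rightarrow> bool" where
  "perfect_aligned m n Y Yt w wt \<longleftrightarrow> align_feasible m n Y Yt w wt \<and>
      (\<forall>z. align_feasible m n Y Yt w z \<longrightarrow> linf n wt \<le> linf n z)"

text \<open>Order-r alignment: ord_align_steps ... t = (wt, u_hat_t) after t steps (1-based step t uses
  column (t-1) mod n).\<close>
primrec ord_align_steps :: "nat \<Rightarrow> nat \<Rightarrow> mat \<Rightarrow> mat \<Rightarrow> vec \<Rightarrow> nat \<Rightarrow> vec \<times> vec" where
  "ord_align_steps m n Y Yt w 0 = (\<lambda>_. 0, \<lambda>_. 0)"
| "ord_align_steps m n Y Yt w (Suc t) =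
     (let (wt, u) = ord_align_steps m n Y Yt w t;
          j = t mod n;
          v = (if t < n then u else (\<lambda>k. u k - w j * Y k j + wt j * Yt k j));
          c = (\<Sum>k<m. Yt k j * (v k + w j * Y k j)) / (\<Sum>k<m. (Yt k j)\<^sup>2)
      in (wt(j := c), \<lambda>k. v k + w j * Y k j - c * Yt k j))"

definition ord_align :: "nat \<Rightarrow> nat \<Rightarrow> nat \<Rightarrow> mat \<Rightarrow> mat \<Rightarrow> vec \<Rightarrow> vec" where
  "ord_align r m n Y Yt w = fst (ord_align_steps m n Y Yt w (r * n))"

definition nonzero_cols :: "nat \<Rightarrow> nat \<Rightarrow> mat \<Rightarrow> bool" where
  "nonzero_cols m n A \<longleftrightarrow> (\<forall>j<n. \<exists>k<m. A k j \<noteq> 0)"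

definition net_err :: "nat \<Rightarrow> (nat \<Rightarrow> nat) \<Rightarrow> (nat \<Rightarrow> mat) \<Rightarrow> (nat \<Rightarrow> mat) \<Rightarrow> mat \<Rightarrow> nat \<Rightarrow> real" where
  "net_err m N W Q X L =
     Max ((\<lambda>j. vnorm m (\<lambda>k. fwd m N W X L k j - fwd m N Q X L k j)) ` {..<N L})"

end

theory Submission
  imports Defs
begin
lemma stocq_support:
  assumes "\<delta> > 0"
  shows "set_pmf (stocq \<delta> z) \<subseteq> {of_int \<lfloor>z / \<delta>\<rfloor> * \<delta>, (of_int \<lfloor>z / \<delta>\<rfloor> + 1) * \<delta>}"
  unfolding stocq_def by auto

lemma stocq_mean:
  assumes "\<delta> > 0"
  shows "measure_pmf.expectation (stocq \<delta> z) (\<lambda>q. q - z) = 0"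
proof -
  define F where "F = real_of_int \<lfloor>z / \<delta>\<rfloor>"
  define th where "th = z / \<delta> - F"
  have th: "0 \<le> th" "th \<le> 1" unfolding th_def F_def
    using floor_correct[of "z/\<delta>"] by linarith+
  have "measure_pmf.expectation (stocq \<delta> z) (\<lambda>q. q - z)
     = ((F + 1) * \<delta> - z) * th + (F * \<delta> - z) * (1 - th)"
    unfolding stocq_def using th by (simp add: F_def th_def)
  also have "\<dots> = F*\<delta> + th * \<delta> - z" by (simp add: algebra_simps)
  also have "\<dots> = 0" using assms unfolding th_def by (simp add: field_simps)
  finally show ?thesis .
qed

lemma stocq_hoeffding:
  assumes d: "\<delta> > 0"
  shows "(\<integral>\<^sup>+q. ennreal (exp (s * (q - z))) \<partial>stocq \<delta> z) \<le> ennreal (exp (s\<^sup>2 * \<delta>\<^sup>2 / 8))"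
proof -
  define a where "a = real_of_int \<lfloor>z / \<delta>\<rfloor> * \<delta> - z"
  have supp: "\<And>q. q \<in> set_pmf (stocq \<delta> z) \<Longrightarrow> q - z \<in> {a..a+\<delta>}"
    using stocq_support[OF d, of z] d unfolding a_def by (auto simp: algebra_simps)
  interpret I1: interval_bounded_random_variable "measure_pmf (stocq \<delta> z)" "\<lambda>q. q - z" a "a + \<delta>"
  proof (unfold_locales)
    show "AE x in measure_pmf (stocq \<delta> z). x - z \<in> {a..a + \<delta>}"
      unfolding AE_measure_pmf_iff using supp by blast
  qed simp
  interpret I2: interval_bounded_random_variable "measure_pmf (stocq \<delta> z)" "\<lambda>q. z - q" "-a-\<delta>" "-a"
  proof (unfold_locales)
    show "AE x in measure_pmf (stocq \<delta> z). z - x \<in> {-a-\<delta>..-a}"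
      unfolding AE_measure_pmf_iff using supp by force
  qed simp
  have m2: "measure_pmf.expectation (stocq \<delta> z) (\<lambda>q. z - q) = 0"
  proof -
    have "measure_pmf.expectation (stocq \<delta> z) (\<lambda>q. z - q) = - measure_pmf.expectation (stocq \<delta> z) (\<lambda>q. q - z)"
      by (subst integral_minus[symmetric]) simp
    then show ?thesis using stocq_mean[OF d] by simp
  qed
  consider "s > 0" | "s = 0" | "s < 0" by linarith
  then show ?thesis
  proof cases
    case 1
    from I1.Hoeffdings_lemma_nn_integral_0[OF 1 stocq_mean[OF d]] show ?thesis by simp
  next
    case 2
    then show ?thesis by (simp add: measure_pmf.emeasure_space_1)
  next
    case 3
    then have "-s > 0" by simp
    from I2.Hoeffdings_lemma_nn_integral_0[OF this m2] show ?thesis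
      by (simp add: algebra_simps)
  qed
qed

definition ip :: "nat \<Rightarrow> vec \<Rightarrow> vec \<Rightarrow> real" where
  "ip m a b = (\<Sum>k<m. a k * b k)"

lemma ip_self_nonneg: "ip m a a \<ge> 0"
  unfolding ip_def by (intro sum_nonneg) auto

lemma ip_sub_scale:
  "ip m (\<lambda>k. b k - c * y k) (\<lambda>k. b k - c * y k) = ip m b b - 2 * c * ip m b y + c^2 * ip m y y"
proof -
  have "(\<Sum>k<m. (b k - c * y k) * (b k - c * y k)) = (\<Sum>k<m. b k * b k - (2 * c) * (b k * y k) + c^2 * (y k * y k))"
    by (intro sum.cong) (auto simp: algebra_simps power2_eq_square)
  also have "\<dots> = (\<Sum>k<m. b k * b k) - (2 * c) * (\<Sum>k<m. b k * y k) + c^2 * (\<Sum>k<m. y k * y k)"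
    by (simp add: sum.distrib sum_subtractf sum_distrib_left)
  finally show ?thesis unfolding ip_def .
qed

lemma mgf_step:
  fixes b u w :: vec
  assumes d: "\<delta> > 0" and Spos: "S > 0" and S: "S = (\<Sum>k<m. (Yt k t)\<^sup>2)"
  defines "\<beta> \<equiv> ip m b (col Yt t)"
  shows "(\<integral>\<^sup>+qt. ennreal (exp (ip m b (\<lambda>k. u k + (w t - qt) * Yt k t)))
            \<partial>stocq \<delta> (w t + (\<Sum>k<m. Yt k t * u k) / S))
       \<le> ennreal (exp (ip m (\<lambda>k. b k - \<beta> / S * Yt k t) u)) * ennreal (exp (\<beta>\<^sup>2 * \<delta>\<^sup>2 / 8))"
proof -
  define z where "z = w t + (\<Sum>k<m. Yt k t * u k) / S"
  define b' where "b' = (\<lambda>k. b k - \<beta> / S * Yt k t)"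
  have e1: "ip m b (\<lambda>k. u k + (w t - qt) * Yt k t) = ip m b u + (w t - qt) * \<beta>" for qt
  proof -
    have "(\<Sum>k<m. b k * (u k + c * Yt k t)) = (\<Sum>k<m. b k * u k) + c * (\<Sum>k<m. b k * Yt k t)" for c
      by (simp add: distrib_left sum.distrib sum_distrib_left mult.assoc mult.left_commute)
    then show ?thesis unfolding ip_def \<beta>_def col_def by simp
  qed
  have e2: "ip m b' u = ip m b u - \<beta> / S * (\<Sum>k<m. Yt k t * u k)"
    unfolding ip_def b'_def by (simp add: algebra_simps sum_subtractf sum_distrib_left)
  have e3: "ip m b (\<lambda>k. u k + (w t - qt) * Yt k t) = ip m b' u + (- \<beta>) * (qt - z)" for qt
    using Spos unfolding e1 e2 z_def by (simp add: field_simps)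
  have "(\<integral>\<^sup>+qt. ennreal (exp (ip m b (\<lambda>k. u k + (w t - qt) * Yt k t))) \<partial>stocq \<delta> z)
      = (\<integral>\<^sup>+qt. ennreal (exp (ip m b' u)) * ennreal (exp ((- \<beta>) * (qt - z))) \<partial>stocq \<delta> z)"
  proof (intro nn_integral_cong)
    fix qt
    show "ennreal (exp (ip m b (\<lambda>k. u k + (w t - qt) * Yt k t))) = ennreal (exp (ip m b' u)) * ennreal (exp ((- \<beta>) * (qt - z)))"
      unfolding e3 by (simp add: ennreal_mult[symmetric] mult_exp_exp)
  qed
  also have "\<dots> = ennreal (exp (ip m b' u)) * (\<integral>\<^sup>+qt. ennreal (exp ((- \<beta>) * (qt - z))) \<partial>stocq \<delta> z)"
    by (rule nn_integral_cmult) simp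
  also have "\<dots> \<le> ennreal (exp (ip m b' u)) * ennreal (exp ((-\<beta>)\<^sup>2 * \<delta>\<^sup>2 / 8))"
    by (intro mult_left_mono stocq_hoeffding d) simp
  finally show ?thesis unfolding z_def b'_def by simp
qed

lemma phase2_mgf:
  assumes d: "\<delta> > 0"
    and cols: "\<forall>t<n. (\<Sum>k<m. (Yt k t)\<^sup>2) > 0"
    and Mb: "\<forall>t<n. (\<Sum>k<m. (Yt k t)\<^sup>2) \<le> M\<^sup>2"
  shows "t \<le> n \<Longrightarrow> (\<integral>\<^sup>+x. ennreal (exp (ip m b (snd x))) \<partial>phase2_steps \<delta> m Yt w t)
            \<le> ennreal (exp (\<delta>\<^sup>2 * M\<^sup>2 * ip m b b / 8))"
proof (induction t arbitrary: b)
  case 0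
  have "0 \<le> \<delta>\<^sup>2 * M\<^sup>2 * ip m b b / 8" using ip_self_nonneg[of m b] by simp
  then show ?case by (simp add: ip_def)
next
  case (Suc t)
  define S where "S = (\<Sum>k<m. (Yt k t)\<^sup>2)"
  have Spos: "S > 0" and SM: "S \<le> M\<^sup>2" using Suc.prems cols Mb unfolding S_def by auto
  define \<beta> where "\<beta> = ip m b (col Yt t)"
  define b' where "b' = (\<lambda>k. b k - \<beta> / S * Yt k t)"
  have bb: "ip m b' b' = ip m b b - \<beta>\<^sup>2 / S"
  proof -
    have "ip m b' b' = ip m b b - 2 * (\<beta> / S) * \<beta> + (\<beta> / S)\<^sup>2 * S"
      unfolding b'_def using ip_sub_scale[of m b "\<beta> / S" "col Yt t"]
      by (simp add: \<beta>_def S_def col_def ip_def power2_eq_square)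
    then show ?thesis using Spos by (simp add: field_simps power2_eq_square)
  qed
  have "(\<integral>\<^sup>+x. ennreal (exp (ip m b (snd x))) \<partial>phase2_steps \<delta> m Yt w (Suc t))
     = (\<integral>\<^sup>+x. (\<integral>\<^sup>+qt. ennreal (exp (ip m b (\<lambda>k. snd x k + (w t - qt) * Yt k t)))
            \<partial>stocq \<delta> (w t + (\<Sum>k<m. Yt k t * snd x k) / S)) \<partial>phase2_steps \<delta> m Yt w t)"
    by (simp add: split_beta S_def)
  also have "\<dots> \<le> (\<integral>\<^sup>+x. ennreal (exp (ip m b' (snd x))) * ennreal (exp (\<beta>\<^sup>2 * \<delta>\<^sup>2 / 8))
            \<partial>phase2_steps \<delta> m Yt w t)"
    unfolding b'_def \<beta>_def
    by (intro nn_integral_mono mgf_step[OF d Spos]) (simp add: S_def)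
  also have "\<dots> = (\<integral>\<^sup>+x. ennreal (exp (ip m b' (snd x))) \<partial>phase2_steps \<delta> m Yt w t) * ennreal (exp (\<beta>\<^sup>2 * \<delta>\<^sup>2 / 8))"
    by (rule nn_integral_multc) simp
  also have "\<dots> \<le> ennreal (exp (\<delta>\<^sup>2 * M\<^sup>2 * ip m b' b' / 8)) * ennreal (exp (\<beta>\<^sup>2 * \<delta>\<^sup>2 / 8))"
    using Suc.prems by (intro mult_right_mono Suc.IH) auto
  also have "\<dots> = ennreal (exp (\<delta>\<^sup>2 * M\<^sup>2 * ip m b' b' / 8 + \<beta>\<^sup>2 * \<delta>\<^sup>2 / 8))"
    by (simp add: exp_add ennreal_mult)
  also have "\<dots> \<le> ennreal (exp (\<delta>\<^sup>2 * M\<^sup>2 * ip m b b / 8))"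
  proof -
    have "\<beta>\<^sup>2 * S \<le> \<beta>\<^sup>2 * M\<^sup>2" using SM by (intro mult_left_mono) auto
    then have "\<beta>\<^sup>2 \<le> M\<^sup>2 * \<beta>\<^sup>2 / S" using Spos by (simp add: field_simps)
    then have "\<delta>\<^sup>2 * \<beta>\<^sup>2 \<le> \<delta>\<^sup>2 * (M\<^sup>2 * \<beta>\<^sup>2 / S)" by (intro mult_left_mono) auto
    then have "\<delta>\<^sup>2 * M\<^sup>2 * ip m b' b' / 8 + \<beta>\<^sup>2 * \<delta>\<^sup>2 / 8 \<le> \<delta>\<^sup>2 * M\<^sup>2 * ip m b b / 8"
      unfolding bb by (simp add: field_simps)
    then show ?thesis by (intro ennreal_leI) simp
  qed
  finally show ?case .
qed

lemma pmf_markov_exp: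
  fixes g :: "'a \<Rightarrow> real"
  assumes l: "l \<ge> 0"
  shows "emeasure (measure_pmf P) {x. a \<le> g x}
          \<le> ennreal (exp (- l * a)) * (\<integral>\<^sup>+x. ennreal (exp (l * g x)) \<partial>P)"
proof -
  have "emeasure (measure_pmf P) {x. a \<le> g x} = (\<integral>\<^sup>+x. indicator {x. a \<le> g x} x \<partial>P)"
    by simp
  also have "\<dots> \<le> (\<integral>\<^sup>+x. ennreal (exp (- l * a)) * ennreal (exp (l * g x)) \<partial>P)"
  proof (intro nn_integral_mono)
    fix x
    have "ennreal (exp (- l * a)) * ennreal (exp (l * g x)) = ennreal (exp (l * (g x - a)))"
      by (simp add: ennreal_mult[symmetric] mult_exp_exp algebra_simps)
    moreover have "indicator {x. a \<le> g x} x \<le> ennreal (exp (l * (g x - a)))"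
    proof (cases "a \<le> g x")
      case True
      then have "0 \<le> l * (g x - a)" using l by simp
      then have "1 \<le> exp (l * (g x - a))" by simp
      then show ?thesis using True by (simp add: ennreal_leI)
    qed simp
    ultimately show "indicator {x. a \<le> g x} x \<le> ennreal (exp (- l * a)) * ennreal (exp (l * g x))"
      by simp
  qed
  also have "\<dots> = ennreal (exp (- l * a)) * (\<integral>\<^sup>+x. ennreal (exp (l * g x)) \<partial>P)"
    by (rule nn_integral_cmult) simp
  finally show ?thesis .
qed

lemma phase2_support:
  "x \<in> set_pmf (phase2_steps \<delta> m Yt w t) \<Longrightarrow> snd x = (\<lambda>k. \<Sum>s<t. (w s - fst x s) * Yt k s)"
proof (induction t arbitrary: x)
  case 0
  then show ?case by simp
next
  case (Suc t)
  from Suc.prems obtain q u qt where qu: "(q, u) \<in> set_pmf (phase2_steps \<delta> m Yt w t)"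
    and x: "x = (q(t := qt), \<lambda>k. u k + (w t - qt) * Yt k t)"
    by (auto simp: split_beta)
  have u: "u = (\<lambda>k. \<Sum>s<t. (w s - q s) * Yt k s)" using Suc.IH[OF qu] by simp
  have "(\<Sum>s<t. (w s - (q(t := qt)) s) * Yt k s) = (\<Sum>s<t. (w s - q s) * Yt k s)" for k
    by (intro sum.cong) auto
  then show ?case unfolding x u by (auto simp: fun_eq_iff)
qed

lemma ip_unit: "k < m \<Longrightarrow> ip m (\<lambda>j. if j = k then c else 0) v = c * v k"
proof -
  assume k: "k < m"
  have "(\<Sum>j<m. (if j = k then c else 0) * v j) = (\<Sum>j<m. if j = k then c * v j else 0)"
    by (intro sum.cong) auto
  then show ?thesis unfolding ip_def using k by simp
qed

lemma ip_unit_self: "k < m \<Longrightarrow> ip m (\<lambda>j. if j = k then c else 0) (\<lambda>j. if j = k then c else 0) = c\<^sup>2"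
  using ip_unit[of k m c "\<lambda>j. if j = k then c else 0"] by (simp add: power2_eq_square)

lemma phase2_coord_tail:
  assumes d: "\<delta> > 0"
    and cols: "\<forall>t<n. (\<Sum>k<m. (Yt k t)\<^sup>2) > 0"
    and Mb: "\<forall>t<n. (\<Sum>k<m. (Yt k t)\<^sup>2) \<le> M\<^sup>2"
    and M: "M > 0" and k: "k < m" and s: "s = 1 \<or> s = -1" and al: "\<alpha> \<ge> 0"
  shows "emeasure (measure_pmf (phase2_steps \<delta> m Yt w n)) {x. \<alpha> \<le> s * snd x k}
           \<le> ennreal (exp (- 2 * \<alpha>\<^sup>2 / (\<delta>\<^sup>2 * M\<^sup>2)))"
proof -
  define l where "l = 4 * \<alpha> / (\<delta>\<^sup>2 * M\<^sup>2)"
  have l: "l \<ge> 0" unfolding l_def using al by simp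
  define b where "b = (\<lambda>j. if j = k then l * s else 0)"
  have "emeasure (measure_pmf (phase2_steps \<delta> m Yt w n)) {x. \<alpha> \<le> s * snd x k}
      \<le> ennreal (exp (- l * \<alpha>)) * (\<integral>\<^sup>+x. ennreal (exp (l * (s * snd x k))) \<partial>phase2_steps \<delta> m Yt w n)"
    by (rule pmf_markov_exp[OF l])
  also have "(\<integral>\<^sup>+x. ennreal (exp (l * (s * snd x k))) \<partial>phase2_steps \<delta> m Yt w n)
      = (\<integral>\<^sup>+x. ennreal (exp (ip m b (snd x))) \<partial>phase2_steps \<delta> m Yt w n)"
    unfolding b_def using ip_unit[OF k] by (simp add: mult.assoc)
  also have "\<dots> \<le> ennreal (exp (\<delta>\<^sup>2 * M\<^sup>2 * ip m b b / 8))"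
    by (rule phase2_mgf[OF d cols Mb]) simp
  also have "ip m b b = l\<^sup>2"
    unfolding b_def using ip_unit_self[OF k, of "l * s"] s by (auto simp: power2_eq_square)
  finally have "emeasure (measure_pmf (phase2_steps \<delta> m Yt w n)) {x. \<alpha> \<le> s * snd x k}
     \<le> ennreal (exp (- l * \<alpha>)) * ennreal (exp (\<delta>\<^sup>2 * M\<^sup>2 * l\<^sup>2 / 8))"
    by (simp add: mult_left_mono)
  also have "\<dots> = ennreal (exp (- l * \<alpha> + \<delta>\<^sup>2 * M\<^sup>2 * l\<^sup>2 / 8))"
    by (simp add: ennreal_mult[symmetric] mult_exp_exp)
  also have "- l * \<alpha> + \<delta>\<^sup>2 * M\<^sup>2 * l\<^sup>2 / 8 = - 2 * \<alpha>\<^sup>2 / (\<delta>\<^sup>2 * M\<^sup>2)"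
    unfolding l_def using d M by (simp add: field_simps power2_eq_square)
  finally show ?thesis .
qed

lemma vnorm_le_of_abs:
  assumes "\<forall>k<m. \<bar>u k\<bar> \<le> a"
  shows "vnorm m u \<le> sqrt (real m) * a"
proof -
  have a: "a \<ge> 0" if "m > 0" using assms that by force
  have "(\<Sum>k<m. (u k)\<^sup>2) \<le> (\<Sum>k<m. a\<^sup>2)"
  proof (intro sum_mono)
    fix k assume "k \<in> {..<m}"
    then have "\<bar>u k\<bar> \<le> a" using assms by auto
    then have "\<bar>u k\<bar>\<^sup>2 \<le> a\<^sup>2" by (rule power_mono) simp
    then show "(u k)\<^sup>2 \<le> a\<^sup>2" by simp
  qed
  then have "vnorm m u \<le> sqrt (real m * a\<^sup>2)" unfolding vnorm_def by simp
  also have "\<dots> = sqrt (real m) * a" 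
    using a by (cases "m = 0") (auto simp: real_sqrt_mult)
  finally show ?thesis .
qed

lemma max_col_norm_ge:
  "j < n \<Longrightarrow> vnorm m (col A j) \<le> max_col_norm m n A"
  unfolding max_col_norm_def by (intro Max_ge) auto

lemma vnorm_nonneg: "vnorm m x \<ge> 0"
  unfolding vnorm_def by (intro real_sqrt_ge_zero sum_nonneg) auto

lemma vnorm_col_sq: "(vnorm m (col A j))\<^sup>2 = (\<Sum>k<m. (A k j)\<^sup>2)"
  unfolding vnorm_def col_def by (simp add: sum_nonneg)

lemma nonzero_col_pos:
  assumes "nonzero_cols m n A" "j < n"
  shows "(\<Sum>k<m. (A k j)\<^sup>2) > 0"
proof -
  obtain k where k: "k < m" "A k j \<noteq> 0" using assms unfolding nonzero_cols_def by auto
  have "(A k j)\<^sup>2 \<le> (\<Sum>k<m. (A k j)\<^sup>2)" using k by (intro member_le_sum) auto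
  moreover have "(A k j)\<^sup>2 > 0" using k by simp
  ultimately show ?thesis by linarith
qed

lemma phase2_tail:
  assumes d: "\<delta> > 0" and n: "n > 0" and nz: "nonzero_cols m n Yt"
  shows "measure_pmf.prob (phase2 \<delta> m n Yt w)
           {q. \<delta> * sqrt (2 * pi * real p * real m * ln (real n)) * max_col_norm m n Yt
                < vnorm m (\<lambda>k. \<Sum>l<n. Yt k l * (w l - q l))}
         \<le> sqrt 2 * real m / real n ^ p"
proof -
  define E where "E = {q. \<delta> * sqrt (2 * pi * real p * real m * ln (real n)) * max_col_norm m n Yt
                < vnorm m (\<lambda>k. \<Sum>l<n. Yt k l * (w l - q l))}"
  have "measure_pmf.prob (phase2 \<delta> m n Yt w) E \<le> sqrt 2 * real m / real n ^ p"
  proof (cases "m = 0 \<or> 1 \<le> sqrt 2 * real m / real n ^ p")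
    case True
    then show ?thesis
    proof
      assume "m = 0"
      then have "E = {}" unfolding E_def vnorm_def by simp
      then show ?thesis by simp
    next
      assume "1 \<le> sqrt 2 * real m / real n ^ p"
      then show ?thesis using measure_pmf.prob_le_1[of "phase2 \<delta> m n Yt w" E] by linarith
    qed
  next
    case False
    then have m: "m \<ge> 1" and lt: "sqrt 2 * real m / real n ^ p < 1" by auto
    have npos: "real n ^ p > 0" using n by simp
    have "sqrt 2 * 1 \<le> sqrt 2 * real m" using m by (intro mult_left_mono) auto
    moreover have "sqrt 2 * real m < real n ^ p" using lt npos by (simp add: field_simps)
    ultimately have "sqrt 2 < real n ^ p" by linarith
    moreover have "1 < sqrt (2::real)" by simp
    ultimately have np1: "1 < real n ^ p" by linarith
    have p: "p \<ge> 1" using np1 by (cases p) auto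
    have n2: "n \<ge> 2" using np1 n by (cases "n = 1") auto
    have np2: "real n ^ p \<ge> 2"
    proof -
      have "real 2 ^ 1 \<le> real n ^ 1" using n2 by simp
      also have "\<dots> \<le> real n ^ p" using p n2 by (intro power_increasing) auto
      finally show ?thesis by simp
    qed
    define M where "M = max_col_norm m n Yt"
    have cols: "\<forall>t<n. (\<Sum>k<m. (Yt k t)\<^sup>2) > 0" using nonzero_col_pos[OF nz] by blast
    have Mb: "\<forall>t<n. (\<Sum>k<m. (Yt k t)\<^sup>2) \<le> M\<^sup>2"
    proof (intro allI impI)
      fix t assume t: "t < n"
      have "vnorm m (col Yt t) \<le> M" unfolding M_def by (rule max_col_norm_ge[OF t])
      then have "(vnorm m (col Yt t))\<^sup>2 \<le> M\<^sup>2" using vnorm_nonneg by (intro power_mono) auto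
      then show "(\<Sum>k<m. (Yt k t)\<^sup>2) \<le> M\<^sup>2" by (simp add: vnorm_col_sq)
    qed
    have Mpos: "M > 0"
    proof -
      have "0 < (vnorm m (col Yt 0))" using cols n unfolding vnorm_def col_def by auto
      then show ?thesis using max_col_norm_ge[OF n, of m Yt] unfolding M_def by linarith
    qed
    have lnn: "ln (real n) > 0" using n2 by simp
    define \<alpha> where "\<alpha> = \<delta> * M * sqrt (2 * pi * real p * ln (real n))"
    have al: "\<alpha> > 0" unfolding \<alpha>_def using d Mpos lnn p by (auto intro!: mult_pos_pos)
    have thr: "\<delta> * sqrt (2 * pi * real p * real m * ln (real n)) * M = sqrt (real m) * \<alpha>"
      unfolding \<alpha>_def by (simp add: real_sqrt_mult[symmetric] ac_simps)
    define A where "A = (\<lambda>(k::nat, b::bool). {x::vec \<times> vec. \<alpha> \<le> (if b then 1 else -1) * snd x k})"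
    let ?P = "phase2_steps \<delta> m Yt w n"
    have sub: "fst -` E \<inter> set_pmf ?P \<subseteq> (\<Union>i\<in>{..<m} \<times> UNIV. A i)"
    proof
      fix x assume x: "x \<in> fst -` E \<inter> set_pmf ?P"
      have sx: "snd x k = (\<Sum>l<n. Yt k l * (w l - fst x l))" for k
        using phase2_support[of x \<delta> m Yt w n] x by (simp add: mult.commute)
      show "x \<in> (\<Union>i\<in>{..<m} \<times> UNIV. A i)"
      proof (rule ccontr)
        assume "x \<notin> (\<Union>i\<in>{..<m} \<times> UNIV. A i)"
        then have nA: "x \<notin> A (k, b)" if "k < m" for k b using that by blast
        have "\<forall>k<m. \<bar>snd x k\<bar> \<le> \<alpha>"
        proof (intro allI impI)
          fix k assume k: "k < m"
          have "\<not> \<alpha> \<le> snd x k" "\<not> \<alpha> \<le> - snd x k"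
            using nA[OF k, of True] nA[OF k, of False] unfolding A_def by auto
          then show "\<bar>snd x k\<bar> \<le> \<alpha>" by linarith
        qed
        then have "vnorm m (snd x) \<le> sqrt (real m) * \<alpha>" by (rule vnorm_le_of_abs)
        moreover have "snd x = (\<lambda>k. \<Sum>l<n. Yt k l * (w l - fst x l))" using sx by auto
        ultimately show False using x thr unfolding E_def M_def by auto
      qed
    qed
    have "measure_pmf.prob (phase2 \<delta> m n Yt w) E = measure_pmf.prob ?P (fst -` E)"
      unfolding phase2_def by simp
    also have "\<dots> = measure_pmf.prob ?P (fst -` E \<inter> set_pmf ?P)"
      by (simp add: measure_Int_set_pmf)
    also have "\<dots> \<le> measure_pmf.prob ?P (\<Union>i\<in>{..<m} \<times> UNIV. A i)"
      by (rule measure_pmf.finite_measure_mono[OF sub]) simp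
    also have "\<dots> \<le> (\<Sum>i\<in>{..<m} \<times> UNIV. measure_pmf.prob ?P (A i))"
      by (rule measure_pmf.finite_measure_subadditive_finite) auto
    also have "\<dots> \<le> (\<Sum>i\<in>{..<m} \<times> (UNIV::bool set). exp (- 2 * \<alpha>\<^sup>2 / (\<delta>\<^sup>2 * M\<^sup>2)))"
    proof (intro sum_mono)
      fix i assume i: "i \<in> {..<m} \<times> (UNIV::bool set)"
      obtain k b where kb: "i = (k, b)" by force
      have "emeasure (measure_pmf ?P) (A i) \<le> ennreal (exp (- 2 * \<alpha>\<^sup>2 / (\<delta>\<^sup>2 * M\<^sup>2)))"
        unfolding kb A_def using i kb al
        by (simp only: prod.case) (rule phase2_coord_tail[OF d cols Mb Mpos], auto)
      then show "measure_pmf.prob ?P (A i) \<le> exp (- 2 * \<alpha>\<^sup>2 / (\<delta>\<^sup>2 * M\<^sup>2))"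
        by (simp add: measure_pmf.emeasure_eq_measure)
    qed
    also have "\<dots> = 2 * real m * exp (- 2 * \<alpha>\<^sup>2 / (\<delta>\<^sup>2 * M\<^sup>2))"
      by (simp add: card_cartesian_product)
    also have "- 2 * \<alpha>\<^sup>2 / (\<delta>\<^sup>2 * M\<^sup>2) = - (4 * pi) * (real p * ln (real n))"
      unfolding \<alpha>_def using d Mpos lnn by (simp add: power_mult_distrib field_simps)
    also have "exp (- (4 * pi) * (real p * ln (real n))) \<le> exp (- 2 * (real p * ln (real n)))"
    proof -
      have "0 \<le> real p * ln (real n)" using lnn by simp
      moreover have "2 \<le> 4 * pi" using pi_gt3 by simp
      ultimately show ?thesis by (intro exp_le_cancel_iff[THEN iffD2] mult_right_mono) auto
    qed
    also have "exp (- 2 * (real p * ln (real n))) = 1 / (real n ^ p)\<^sup>2"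
    proof -
      have "exp (real p * ln (real n)) = real n ^ p"
        using n by (simp add: exp_of_nat_mult)
      define X where "X = real p * ln (real n)"
      have "exp (- 2 * X) * (exp X * exp X) = exp (- 2 * X + (X + X))" by (simp add: mult_exp_exp)
      also have "\<dots> = 1" by simp
      finally have e: "exp (- 2 * X) * (exp X * exp X) = 1" .
      have "exp X = real n ^ p" unfolding X_def by fact
      with e npos show ?thesis unfolding X_def[symmetric] by (simp add: field_simps power2_eq_square)
    qed
    finally have "measure_pmf.prob (phase2 \<delta> m n Yt w) E \<le> 2 * real m * (1 / (real n ^ p)\<^sup>2)"
      using m by simp
    also have "\<dots> \<le> sqrt 2 * real m / real n ^ p"
    proof -
      have "2 / (real n ^ p)\<^sup>2 \<le> 1 / real n ^ p"
      proof -
        define P where "P = real n ^ p"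
        have P2: "2 \<le> P" using np2 unfolding P_def .
        have "2 * P \<le> P * P" using P2 by (intro mult_right_mono) auto
        then have "2 / (P * P) \<le> 1 / P" using P2 by (simp add: divide_simps)
        then show ?thesis unfolding P_def by (simp add: power2_eq_square)
      qed
      also have "\<dots> \<le> sqrt 2 / real n ^ p" using npos by (simp add: divide_right_mono)
      finally have h: "2 / (real n ^ p)\<^sup>2 \<le> sqrt 2 / real n ^ p" .
      have "real m * (2 / (real n ^ p)\<^sup>2) \<le> real m * (sqrt 2 / real n ^ p)"
        by (rule mult_left_mono[OF h]) simp
      moreover have "2 * real m * (1 / (real n ^ p)\<^sup>2) = real m * (2 / (real n ^ p)\<^sup>2)" by simp
      moreover have "sqrt 2 * real m / real n ^ p = real m * (sqrt 2 / real n ^ p)" by simp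
      ultimately show ?thesis by (simp only:)
    qed
    finally show ?thesis .
  qed
  then show ?thesis unfolding E_def .
qed

definition restr :: "nat \<Rightarrow> (nat \<Rightarrow> mat) \<Rightarrow> (nat \<Rightarrow> mat)" where
  "restr i Q = (\<lambda>k. if k \<le> i then Q k else (\<lambda>_ _. 0))"

lemma fwd_cong: "(\<And>k. k \<le> i \<Longrightarrow> Q k = Q' k) \<Longrightarrow> fwd m N Q X i = fwd m N Q' X i"
  by (induction i) auto

lemma fwd_restr: "i \<le> j \<Longrightarrow> fwd m N (restr j Q) X i = fwd m N Q X i"
  by (rule fwd_cong) (auto simp: restr_def)

lemma qnet_support_zero:
  "Q \<in> set_pmf (qnet \<delta> m N W X al i) \<Longrightarrow> k > i \<Longrightarrow> Q k = (\<lambda>_ _. 0)"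
proof (induction i arbitrary: Q)
  case 0
  then show ?case by simp
next
  case (Suc i)
  from Suc.prems(1) obtain Q0 M where Q0: "Q0 \<in> set_pmf (qnet \<delta> m N W X al i)" and Q: "Q = Q0(Suc i := M)"
    by auto
  show ?case using Suc.IH[OF Q0] Suc.prems(2) unfolding Q by auto
qed

lemma qnet_restr:
  "i \<le> L \<Longrightarrow> map_pmf (restr i) (qnet \<delta> m N W X al L) = qnet \<delta> m N W X al i"
proof (induction L)
  case 0
  then have "restr i (\<lambda>_ _ _. 0) = (\<lambda>_ _ _. 0)" by (auto simp: restr_def fun_eq_iff)
  then show ?case using 0 by simp
next
  case (Suc L)
  show ?case
  proof (cases "i = Suc L")
    case True
    have "map_pmf (restr i) (qnet \<delta> m N W X al (Suc L)) = map_pmf (\<lambda>x. x) (qnet \<delta> m N W X al (Suc L))"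
    proof (rule map_pmf_cong[OF refl])
      fix Q assume "Q \<in> set_pmf (qnet \<delta> m N W X al (Suc L))"
      from qnet_support_zero[OF this] show "restr i Q = Q"
        unfolding restr_def True by (auto simp: fun_eq_iff)
    qed
    then show ?thesis using True by simp
  next
    case False
    then have iL: "i \<le> L" using Suc.prems by simp
    have "map_pmf (restr i) (qnet \<delta> m N W X al (Suc L))
        = bind_pmf (qnet \<delta> m N W X al L) (\<lambda>Q. return_pmf (restr i Q))"
    proof -
      have e: "(\<lambda>M. restr i (Q(Suc L := M))) = (\<lambda>M. restr i Q)" for Q
        using iL by (auto simp: restr_def fun_eq_iff)
      show ?thesis by (simp add: map_bind_pmf map_pmf_comp e)
    qed
    also have "\<dots> = map_pmf (restr i) (qnet \<delta> m N W X al L)"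
      by (simp add: map_pmf_def)
    finally show ?thesis using Suc.IH[OF iL] by simp
  qed
qed

lemma qnet_set_restr:
  assumes "i \<le> L" "Q \<in> set_pmf (qnet \<delta> m N W X al i)"
  shows "\<exists>Q'\<in>set_pmf (qnet \<delta> m N W X al L). \<forall>k\<le>i. Q k = Q' k"
proof -
  have "Q \<in> restr i ` set_pmf (qnet \<delta> m N W X al L)"
    using assms qnet_restr[OF assms(1), of \<delta> m N W X al] by (metis set_map_pmf)
  then show ?thesis by (auto simp: restr_def)
qed

lemma bind_pmf_emeasure_le:
  assumes "\<And>x. x \<in> set_pmf M \<Longrightarrow> emeasure (measure_pmf (f x)) A \<le> indicator B x + ennreal c"
  shows "emeasure (measure_pmf (bind_pmf M f)) A \<le> emeasure (measure_pmf M) B + ennreal c"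
proof -
  have "emeasure (measure_pmf (bind_pmf M f)) A = (\<integral>\<^sup>+x. emeasure (measure_pmf (f x)) A \<partial>M)"
    by simp
  also have "\<dots> \<le> (\<integral>\<^sup>+x. indicator B x + ennreal c \<partial>M)"
    by (intro nn_integral_mono_AE AE_pmfI assms)
  also have "\<dots> = emeasure (measure_pmf M) B + ennreal c"
    by (subst nn_integral_add) (auto simp: measure_pmf.emeasure_space_1)
  finally show ?thesis .
qed

definition layer_bad :: "nat \<Rightarrow> nat \<Rightarrow> mat \<Rightarrow> (nat \<Rightarrow> vec) \<Rightarrow> real \<Rightarrow> nat \<Rightarrow> mat set" where
  "layer_bad m n Yt wcols thr c =
     {M. \<exists>j<c. thr < vnorm m (\<lambda>k. \<Sum>l<n. Yt k l * (wcols j l - M l j))}"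

lemma layer_q_bad:
  assumes b: "\<And>j. j < c \<Longrightarrow> measure_pmf.prob (phase2 \<delta> m n Yt (wcols j))
             {q. thr < vnorm m (\<lambda>k. \<Sum>l<n. Yt k l * (wcols j l - q l))} \<le> \<beta>"
  shows "measure_pmf.prob (layer_q \<delta> m n Yt wcols c) (layer_bad m n Yt wcols thr c) \<le> real c * \<beta>"
  using b
proof (induction c)
  case 0
  then show ?case by (simp add: layer_bad_def)
next
  case (Suc c)
  have \<beta>: "\<beta> \<ge> 0" using Suc.prems[of 0] measure_nonneg[of "measure_pmf (phase2 \<delta> m n Yt (wcols 0))"] 
    by (meson le_less_trans not_le zero_less_Suc)
  let ?B = "layer_bad m n Yt wcols thr c"
  have "emeasure (measure_pmf (layer_q \<delta> m n Yt wcols (Suc c))) (layer_bad m n Yt wcols thr (Suc c))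
      \<le> emeasure (measure_pmf (layer_q \<delta> m n Yt wcols c)) ?B + ennreal \<beta>"
    unfolding layer_q.simps
  proof (rule bind_pmf_emeasure_le)
    fix M0 assume "M0 \<in> set_pmf (layer_q \<delta> m n Yt wcols c)"
    show "emeasure (measure_pmf (map_pmf (\<lambda>q l j. if j = c then q l else M0 l j) (phase2 \<delta> m n Yt (wcols c))))
            (layer_bad m n Yt wcols thr (Suc c)) \<le> indicator ?B M0 + ennreal \<beta>"
    proof (cases "M0 \<in> ?B")
      case True
      have "emeasure (measure_pmf (map_pmf (\<lambda>q l j. if j = c then q l else M0 l j) (phase2 \<delta> m n Yt (wcols c))))
            (layer_bad m n Yt wcols thr (Suc c)) \<le> 1" by (rule measure_pmf.emeasure_le_1)
      also have "\<dots> \<le> indicator ?B M0 + ennreal \<beta>" using True by simp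
      finally show ?thesis .
    next
      case False
      have "(\<lambda>q l j. if j = c then q l else M0 l j) -` layer_bad m n Yt wcols thr (Suc c)
          = {q. thr < vnorm m (\<lambda>k. \<Sum>l<n. Yt k l * (wcols c l - q l))}"
      proof (intro set_eqI iffI)
        fix q assume "q \<in> (\<lambda>q l j. if j = c then q l else M0 l j) -` layer_bad m n Yt wcols thr (Suc c)"
        then obtain j where j: "j < Suc c"
          and lt: "thr < vnorm m (\<lambda>k. \<Sum>l<n. Yt k l * (wcols j l - (if j = c then q l else M0 l j)))"
          unfolding layer_bad_def by auto
        show "q \<in> {q. thr < vnorm m (\<lambda>k. \<Sum>l<n. Yt k l * (wcols c l - q l))}"
        proof (cases "j = c")
          case True
          then show ?thesis using lt by simp
        next
          case False
          then have "j < c" using j by simp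
          then have "M0 \<in> ?B" using lt False unfolding layer_bad_def by auto
          then show ?thesis using \<open>M0 \<notin> ?B\<close> by simp
        qed
      next
        fix q assume "q \<in> {q. thr < vnorm m (\<lambda>k. \<Sum>l<n. Yt k l * (wcols c l - q l))}"
        then show "q \<in> (\<lambda>q l j. if j = c then q l else M0 l j) -` layer_bad m n Yt wcols thr (Suc c)"
          unfolding layer_bad_def by auto
      qed
      then have "emeasure (measure_pmf (map_pmf (\<lambda>q l j. if j = c then q l else M0 l j) (phase2 \<delta> m n Yt (wcols c))))
            (layer_bad m n Yt wcols thr (Suc c))
          = ennreal (measure_pmf.prob (phase2 \<delta> m n Yt (wcols c)) {q. thr < vnorm m (\<lambda>k. \<Sum>l<n. Yt k l * (wcols c l - q l))})"
        by (simp add: measure_pmf.emeasure_eq_measure)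
      also have "\<dots> \<le> ennreal \<beta>" using Suc.prems[of c] by (intro ennreal_leI) simp
      finally show ?thesis using False by simp
    qed
  qed
  also have "\<dots> \<le> ennreal (real c * \<beta>) + ennreal \<beta>"
    using Suc.IH Suc.prems by (simp add: measure_pmf.emeasure_eq_measure ennreal_leI)
  also have "\<dots> = ennreal (real (Suc c) * \<beta>)"
    using \<beta> by (simp add: ennreal_plus[symmetric] algebra_simps del: ennreal_plus)
  finally show ?case
    using \<beta> by (simp add: measure_pmf.emeasure_eq_measure)
qed

definition thr :: "real \<Rightarrow> nat \<Rightarrow> nat \<Rightarrow> nat \<Rightarrow> mat \<Rightarrow> real" where
  "thr \<delta> p m n Yt = \<delta> * sqrt (2 * pi * real p * real m * ln (real n)) * max_col_norm m n Yt"

definition bad_net where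
  "bad_net \<delta> m N W X al p i = {Q. Q (Suc i) \<in> layer_bad m (N i) (fwd m N Q X i)
      (\<lambda>j. al (N i) (fwd m N W X i) (fwd m N Q X i) (col (W (Suc i)) j))
      (thr \<delta> p m (N i) (fwd m N Q X i)) (N (Suc i))}"

lemma net_layer_prob:
  assumes d: "\<delta> > 0" and iL: "Suc i \<le> L" and Ni: "N i > 0"
    and nz: "\<forall>Q\<in>set_pmf (qnet \<delta> m N W X al L). nonzero_cols m (N i) (fwd m N Q X i)"
  shows "measure_pmf.prob (qnet \<delta> m N W X al L) (bad_net \<delta> m N W X al p i)
           \<le> real (N (Suc i)) * (sqrt 2 * real m / real (N i) ^ p)"
proof -
  let ?bad = "bad_net \<delta> m N W X al p i"
  let ?\<beta> = "sqrt 2 * real m / real (N i) ^ p"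
  have pre: "restr (Suc i) -` ?bad = ?bad"
  proof -
    have "restr (Suc i) Q \<in> ?bad \<longleftrightarrow> Q \<in> ?bad" for Q
      unfolding bad_net_def using fwd_restr[of i "Suc i" m N Q X] by (simp add: restr_def)
    then show ?thesis by auto
  qed
  have "measure_pmf.prob (qnet \<delta> m N W X al L) ?bad
      = measure_pmf.prob (qnet \<delta> m N W X al L) (restr (Suc i) -` ?bad)"
    by (simp only: pre)
  also have "\<dots> = measure_pmf.prob (map_pmf (restr (Suc i)) (qnet \<delta> m N W X al L)) ?bad"
    by simp
  also have "\<dots> = measure_pmf.prob (qnet \<delta> m N W X al (Suc i)) ?bad"
    by (simp only: qnet_restr[OF iL])
  also have "\<dots> \<le> real (N (Suc i)) * ?\<beta>"
  proof -
    have "emeasure (measure_pmf (qnet \<delta> m N W X al (Suc i))) ?bad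
        \<le> emeasure (measure_pmf (qnet \<delta> m N W X al i)) {} + ennreal (real (N (Suc i)) * ?\<beta>)"
      unfolding qnet.simps
    proof (rule bind_pmf_emeasure_le)
      fix Q assume Q: "Q \<in> set_pmf (qnet \<delta> m N W X al i)"
      obtain Q' where Q': "Q' \<in> set_pmf (qnet \<delta> m N W X al L)" "\<forall>k\<le>i. Q k = Q' k"
        using qnet_set_restr[OF _ Q, of L] iL by auto
      have fQ: "fwd m N Q X i = fwd m N Q' X i" using Q'(2) by (intro fwd_cong) auto
      have nzQ: "nonzero_cols m (N i) (fwd m N Q X i)" using nz Q'(1) fQ by simp
      let ?Yt = "fwd m N Q X i"
      let ?wc = "\<lambda>j. al (N i) (fwd m N W X i) (fwd m N Q X i) (col (W (Suc i)) j)"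
      have fM: "fwd m N (Q(Suc i := M)) X i = fwd m N Q X i" for M by (intro fwd_cong) auto
      have "(\<lambda>M. Q(Suc i := M)) -` ?bad = layer_bad m (N i) ?Yt ?wc (thr \<delta> p m (N i) ?Yt) (N (Suc i))"
        unfolding bad_net_def by (auto simp: fM)
      then have "emeasure (measure_pmf (map_pmf (\<lambda>M. Q(Suc i := M))
                   (layer_q \<delta> m (N i) ?Yt ?wc (N (Suc i))))) ?bad
          = ennreal (measure_pmf.prob (layer_q \<delta> m (N i) ?Yt ?wc (N (Suc i)))
                 (layer_bad m (N i) ?Yt ?wc (thr \<delta> p m (N i) ?Yt) (N (Suc i))))"
        by (simp add: measure_pmf.emeasure_eq_measure)
      also have "\<dots> \<le> ennreal (real (N (Suc i)) * ?\<beta>)"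
      proof (intro ennreal_leI layer_q_bad)
        fix j
        show "measure_pmf.prob (phase2 \<delta> m (N i) ?Yt (?wc j))
             {q. thr \<delta> p m (N i) ?Yt < vnorm m (\<lambda>k. \<Sum>l<N i. ?Yt k l * (?wc j l - q l))} \<le> ?\<beta>"
          unfolding thr_def by (rule phase2_tail[OF d Ni nzQ])
      qed
      finally show "emeasure (measure_pmf (map_pmf (\<lambda>M. Q(Suc i := M))
                   (layer_q \<delta> m (N i) ?Yt ?wc (N (Suc i))))) ?bad
            \<le> indicator {} Q + ennreal (real (N (Suc i)) * ?\<beta>)" by simp
    qed
    then have "emeasure (measure_pmf (qnet \<delta> m N W X al (Suc i))) ?bad \<le> ennreal (real (N (Suc i)) * ?\<beta>)"
      by simp
    then show ?thesis by (simp add: measure_pmf.emeasure_eq_measure ennreal_le_iff)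
  qed
  finally show ?thesis .
qed

definition mv :: "nat \<Rightarrow> mat \<Rightarrow> vec \<Rightarrow> vec" where
  "mv m A x = (\<lambda>k. \<Sum>l<m. A k l * x l)"

lemma vnorm_L2: "vnorm m x = L2_set x {..<m}"
  unfolding vnorm_def L2_set_def by simp

lemma vnorm_cong: "(\<And>k. k < m \<Longrightarrow> x k = y k) \<Longrightarrow> vnorm m x = vnorm m y"
  unfolding vnorm_def by (intro arg_cong[where f=sqrt] sum.cong) auto

lemma vnorm_triangle: "vnorm m (\<lambda>k. x k + y k) \<le> vnorm m x + vnorm m y"
  unfolding vnorm_L2 by (rule L2_set_triangle_ineq)

lemma vnorm_scale: "vnorm m (\<lambda>k. c * x k) = \<bar>c\<bar> * vnorm m x"
proof -
  have "vnorm m (\<lambda>k. c * x k) = sqrt (c\<^sup>2 * (\<Sum>k<m. (x k)\<^sup>2))"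
    unfolding vnorm_def by (simp add: power_mult_distrib sum_distrib_left)
  then show ?thesis unfolding vnorm_def by (simp add: real_sqrt_mult)
qed

lemma vnorm_minus: "vnorm m (\<lambda>k. - x k) = vnorm m x"
  using vnorm_scale[of m "-1" x] by simp

lemma vnorm_diff_comm: "vnorm m (\<lambda>k. x k - y k) = vnorm m (\<lambda>k. y k - x k)"
  using vnorm_minus[of m "\<lambda>k. x k - y k"] by simp

lemma vnorm_mono_abs:
  assumes "\<And>k. k < m \<Longrightarrow> \<bar>x k\<bar> \<le> \<bar>y k\<bar>"
  shows "vnorm m x \<le> vnorm m y"
proof -
  have "(\<Sum>k<m. (x k)\<^sup>2) \<le> (\<Sum>k<m. (y k)\<^sup>2)"
  proof (intro sum_mono)
    fix k assume "k \<in> {..<m}"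
    then have "\<bar>x k\<bar> \<le> \<bar>y k\<bar>" using assms by auto
    then have "\<bar>x k\<bar>\<^sup>2 \<le> \<bar>y k\<bar>\<^sup>2" by (rule power_mono) simp
    then show "(x k)\<^sup>2 \<le> (y k)\<^sup>2" by simp
  qed
  then show ?thesis unfolding vnorm_def by (rule real_sqrt_le_mono)
qed

lemma sum_delta_mult: "(k::nat) < m \<Longrightarrow> (\<Sum>l<m. (if k = l then 1 else 0) * x l) = (x k :: real)"
proof -
  assume k: "k < m"
  have "(\<Sum>l<m. (if k = l then 1 else 0) * x l) = (\<Sum>l<m. if l = k then x l else 0)"
    by (intro sum.cong) auto
  also have "\<dots> = x k" using k by (subst sum.delta) auto
  finally show ?thesis .
qed

lemma vnorm_sq: "(vnorm m x)\<^sup>2 = ip m x x"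
  unfolding vnorm_def ip_def by (simp add: sum_nonneg power2_eq_square)

lemma abs_le_vnorm: "l < m \<Longrightarrow> \<bar>x l\<bar> \<le> vnorm m x"
proof -
  assume l: "l < m"
  have "(x l)\<^sup>2 \<le> (\<Sum>k<m. (x k)\<^sup>2)" using l by (intro member_le_sum) auto
  then have "sqrt ((x l)\<^sup>2) \<le> vnorm m x" unfolding vnorm_def by (rule real_sqrt_le_mono)
  then show ?thesis by simp
qed

lemma vnorm_zero: "vnorm m x = 0 \<Longrightarrow> k < m \<Longrightarrow> x k = 0"
  using abs_le_vnorm[of k m x] by simp

lemma proj_contract:
  assumes S: "ip m y y > 0"
  shows "vnorm m (\<lambda>k. x k - ip m y x / ip m y y * y k) \<le> vnorm m x"
proof -
  have "(vnorm m (\<lambda>k. x k - ip m y x / ip m y y * y k))\<^sup>2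
      = ip m x x - 2 * (ip m y x / ip m y y) * ip m x y + (ip m y x / ip m y y)\<^sup>2 * ip m y y"
    unfolding vnorm_sq by (rule ip_sub_scale)
  also have "ip m x y = ip m y x" unfolding ip_def by (simp add: mult.commute)
  also have "ip m x x - 2 * (ip m y x / ip m y y) * ip m y x + (ip m y x / ip m y y)\<^sup>2 * ip m y y
      = ip m x x - (ip m y x)\<^sup>2 / ip m y y"
    using S by (simp add: field_simps power2_eq_square)
  also have "\<dots> \<le> ip m x x" using S by simp
  also have "\<dots> = (vnorm m x)\<^sup>2" by (simp add: vnorm_sq)
  finally show ?thesis using vnorm_nonneg[of m x] by (simp add: power2_le_iff_abs_le)
qed

lemma mv_cong: "(\<And>k. k < m \<Longrightarrow> x k = y k) \<Longrightarrow> mv m A x = mv m A y"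
  unfolding mv_def by (auto intro!: sum.cong)

lemma mv_matmul: "mv m (matmul m A B) x = mv m A (mv m B x)"
proof -
  have "(\<Sum>l<m. (\<Sum>j<m. A k j * B j l) * x l) = (\<Sum>j<m. A k j * (\<Sum>l<m. B j l * x l))" for k
  proof -
    have "(\<Sum>l<m. (\<Sum>j<m. A k j * B j l) * x l) = (\<Sum>l<m. \<Sum>j<m. A k j * B j l * x l)"
      by (simp add: sum_distrib_right)
    also have "\<dots> = (\<Sum>j<m. \<Sum>l<m. A k j * B j l * x l)" by (rule sum.swap)
    also have "\<dots> = (\<Sum>j<m. A k j * (\<Sum>l<m. B j l * x l))"
      by (simp add: sum_distrib_left mult.assoc)
    finally show ?thesis .
  qed
  then show ?thesis unfolding mv_def matmul_def by simp
qed

lemma mv_id: "k < m \<Longrightarrow> mv m (\<lambda>k l. if k = l then 1 else 0) x k = x k"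
  unfolding mv_def by (rule sum_delta_mult)

lemma mv_proj: "k < m \<Longrightarrow> mv m (proj_perp m y) x k = x k - ip m y x / ip m y y * y k"
proof -
  assume k: "k < m"
  have "mv m (proj_perp m y) x k = (\<Sum>l<m. (if k = l then 1 else 0) * x l) - (\<Sum>l<m. y k * y l / ip m y y * x l)"
    unfolding mv_def proj_perp_def ip_def by (simp add: power2_eq_square left_diff_distrib sum_subtractf)
  also have "(\<Sum>l<m. (if k = l then 1 else 0) * x l) = x k" using k by (rule sum_delta_mult)
  also have "(\<Sum>l<m. y k * y l / ip m y y * x l) = ip m y x / ip m y y * y k"
    unfolding ip_def by (simp add: sum_distrib_left sum_divide_distrib ac_simps)
  finally show ?thesis .
qed

lemma opnorm_bdd: "bdd_above {vnorm m (\<lambda>k. \<Sum>l<m. P k l * x l) | x. vnorm m x \<le> 1}"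
proof -
  define R where "R = (\<lambda>k. \<Sum>l<m. \<bar>P k l\<bar>)"
  have "vnorm m (\<lambda>k. \<Sum>l<m. P k l * x l) \<le> vnorm m R" if x: "vnorm m x \<le> 1" for x
  proof (rule vnorm_mono_abs)
    fix k
    have "\<bar>\<Sum>l<m. P k l * x l\<bar> \<le> (\<Sum>l<m. \<bar>P k l\<bar> * \<bar>x l\<bar>)"
      by (rule order.trans[OF sum_abs]) (simp add: abs_mult)
    also have "\<dots> \<le> (\<Sum>l<m. \<bar>P k l\<bar> * 1)"
      using abs_le_vnorm[of _ m x] x by (intro sum_mono mult_left_mono) force+
    finally show "\<bar>\<Sum>l<m. P k l * x l\<bar> \<le> \<bar>R k\<bar>" unfolding R_def by simp
  qed
  then show ?thesis by (auto intro!: bdd_aboveI)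
qed

lemma opnorm_nonneg: "opnorm2 m P \<ge> 0"
proof -
  have "vnorm m (\<lambda>k. \<Sum>l<m. P k l * (\<lambda>_. 0) l) \<in> {vnorm m (\<lambda>k. \<Sum>l<m. P k l * x l) | x. vnorm m x \<le> 1}"
    by (auto simp: vnorm_def intro!: exI[of _ "\<lambda>_. 0"])
  then have "vnorm m (\<lambda>k. \<Sum>l<m. P k l * (\<lambda>_. 0) l) \<le> opnorm2 m P"
    unfolding opnorm2_def by (rule cSup_upper[OF _ opnorm_bdd])
  then show ?thesis by (simp add: vnorm_def)
qed

lemma opnorm_bound: "vnorm m (mv m P x) \<le> opnorm2 m P * vnorm m x"
proof (cases "vnorm m x = 0")
  case True
  then have "mv m P x = mv m P (\<lambda>_. 0)" using vnorm_zero by (intro mv_cong) auto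
  then show ?thesis using True by (simp add: mv_def vnorm_def)
next
  case False
  then have pos: "vnorm m x > 0" using vnorm_nonneg[of m x] by simp
  define x' where "x' = (\<lambda>k. (1 / vnorm m x) * x k)"
  have "vnorm m x' = 1" unfolding x'_def vnorm_scale using pos by simp
  then have "vnorm m (\<lambda>k. \<Sum>l<m. P k l * x' l) \<in> {vnorm m (\<lambda>k. \<Sum>l<m. P k l * x l) | x. vnorm m x \<le> 1}"
    by auto
  then have le: "vnorm m (\<lambda>k. \<Sum>l<m. P k l * x' l) \<le> opnorm2 m P"
    unfolding opnorm2_def by (rule cSup_upper[OF _ opnorm_bdd])
  have "(\<lambda>k. \<Sum>l<m. P k l * x' l) = (\<lambda>k. (1 / vnorm m x) * mv m P x k)"
    unfolding x'_def mv_def by (simp add: sum_distrib_left ac_simps)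
  then have "vnorm m (\<lambda>k. \<Sum>l<m. P k l * x' l) = \<bar>1 / vnorm m x\<bar> * vnorm m (mv m P x)"
    by (simp only: vnorm_scale)
  then have "vnorm m (\<lambda>k. \<Sum>l<m. P k l * x' l) = vnorm m (mv m P x) / vnorm m x"
    using pos by simp
  then have "vnorm m (mv m P x) = vnorm m (\<lambda>k. \<Sum>l<m. P k l * x' l) * vnorm m x"
    using pos by (simp add: field_simps)
  also have "\<dots> \<le> opnorm2 m P * vnorm m x" using le pos by (intro mult_right_mono) auto
  finally show ?thesis .
qed

lemma sum_upd:
  fixes a f :: "nat \<Rightarrow> real"
  shows "(j::nat) < n \<Longrightarrow> (\<Sum>l<n. a l * (f(j := c)) l) = (\<Sum>l<n. a l * f l) + a j * (c - f j)"
proof -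
  assume j: "j < n"
  have "(\<Sum>l<n. a l * (f(j := c)) l) = (\<Sum>l<n. a l * f l + (if l = j then a j * (c - f j) else 0))"
    by (intro sum.cong) (auto simp: algebra_simps)
  also have "\<dots> = (\<Sum>l<n. a l * f l) + (\<Sum>l<n. if l = j then a j * (c - f j) else 0)"
    by (rule sum.distrib)
  also have "(\<Sum>l<n. if l = j then a j * (c - f j) else 0) = a j * (c - f j)"
    using j by (subst sum.delta) auto
  finally show ?thesis .
qed

lemma oa_inv:
  assumes n: "n > 0"
  shows "snd (ord_align_steps m n Y Yt w t)
           = (\<lambda>k. \<Sum>l<min t n. Y k l * w l - Yt k l * fst (ord_align_steps m n Y Yt w t) l)"
proof (induction t)
  case 0
  then show ?case by simp
next
  case (Suc t)
  obtain wt u where st: "ord_align_steps m n Y Yt w t = (wt, u)" by force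
  have IH: "u = (\<lambda>k. \<Sum>l<min t n. Y k l * w l - Yt k l * wt l)" using Suc.IH st by simp
  show ?case
  proof (cases "t < n")
    case True
    define c where "c = (\<Sum>k<m. Yt k t * (u k + w t * Y k t)) / (\<Sum>k<m. (Yt k t)\<^sup>2)"
    have e: "ord_align_steps m n Y Yt w (Suc t) = (wt(t := c), \<lambda>k. u k + w t * Y k t - c * Yt k t)"
      using True by (simp add: st Let_def c_def)
    have "(\<Sum>l<Suc t. Y k l * w l - Yt k l * (wt(t := c)) l) = u k + w t * Y k t - c * Yt k t" for k
    proof -
      have "(\<Sum>l<t. Y k l * w l - Yt k l * (wt(t := c)) l) = (\<Sum>l<t. Y k l * w l - Yt k l * wt l)"
        by (intro sum.cong) auto
      then show ?thesis using True IH by (simp add: algebra_simps)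
    qed
    moreover have "min (Suc t) n = Suc t" using True by simp
    ultimately show ?thesis unfolding e by auto
  next
    case False
    define j where "j = t mod n"
    have j: "j < n" unfolding j_def using n by simp
    define v where "v = (\<lambda>k. u k - w j * Y k j + wt j * Yt k j)"
    define c where "c = (\<Sum>k<m. Yt k j * (v k + w j * Y k j)) / (\<Sum>k<m. (Yt k j)\<^sup>2)"
    have e: "ord_align_steps m n Y Yt w (Suc t) = (wt(j := c), \<lambda>k. v k + w j * Y k j - c * Yt k j)"
      using False by (simp add: st Let_def c_def v_def j_def)
    have mn: "min (Suc t) n = n" "min t n = n" using False by auto
    have "(\<Sum>l<n. Y k l * w l - Yt k l * (wt(j := c)) l) = v k + w j * Y k j - c * Yt k j" for k
    proof -
      have "(\<Sum>l<n. Y k l * w l - Yt k l * (wt(j := c)) l)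
          = (\<Sum>l<n. Y k l * w l) - (\<Sum>l<n. Yt k l * (wt(j := c)) l)"
        by (rule sum_subtractf)
      also have "\<dots> = (\<Sum>l<n. Y k l * w l) - ((\<Sum>l<n. Yt k l * wt l) + Yt k j * (c - wt j))"
        using sum_upd[OF j, of "\<lambda>l. Yt k l" wt c] by simp
      also have "u k = (\<Sum>l<n. Y k l * w l) - (\<Sum>l<n. Yt k l * wt l)"
        using IH mn by (simp add: sum_subtractf)
      ultimately show ?thesis unfolding v_def by (simp add: algebra_simps)
    qed
    then show ?thesis unfolding e mn by auto
  qed
qed

lemma ip_col: "(\<Sum>k<m. (Yt k j)\<^sup>2) = ip m (col Yt j) (col Yt j)"
  unfolding ip_def col_def by (simp add: power2_eq_square)

lemma oa_first:
  assumes nz: "\<forall>j<n. ip m (col Yt j) (col Yt j) > 0"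
  shows "t \<le> n \<Longrightarrow> vnorm m (snd (ord_align_steps m n Y Yt w t))
           \<le> (\<Sum>l<t. \<bar>w l\<bar> * vnorm m (\<lambda>k. Y k l - Yt k l))"
proof (induction t)
  case 0
  then show ?case by (simp add: vnorm_def)
next
  case (Suc t)
  obtain wt u where st: "ord_align_steps m n Y Yt w t = (wt, u)" by force
  have t: "t < n" using Suc.prems by simp
  define y where "y = col Yt t"
  define S where "S = ip m y y"
  have S: "S > 0" using nz t unfolding S_def y_def by auto
  define c where "c = (\<Sum>k<m. Yt k t * (u k + w t * Y k t)) / (\<Sum>k<m. (Yt k t)\<^sup>2)"
  have e: "snd (ord_align_steps m n Y Yt w (Suc t)) = (\<lambda>k. u k + w t * Y k t - c * Yt k t)"
    using t by (simp add: st Let_def c_def)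
  define x where "x = (\<lambda>k. u k + w t * (Y k t - Yt k t))"
  have c: "c = ip m y (\<lambda>k. u k + w t * Y k t) / S"
    unfolding c_def S_def y_def ip_col[symmetric] by (simp add: ip_def col_def)
  have ipx: "ip m y x = ip m y (\<lambda>k. u k + w t * Y k t) - w t * S"
    unfolding x_def S_def y_def col_def ip_def by (simp add: algebra_simps sum_subtractf sum.distrib sum_distrib_left)
  have "(\<lambda>k. u k + w t * Y k t - c * Yt k t) = (\<lambda>k. x k - ip m y x / ip m y y * y k)"
  proof
    fix k
    have "ip m y x / ip m y y = c - w t" unfolding ipx c using S by (simp add: S_def field_simps)
    moreover have "u k + w t * Y k t - c * Yt k t = x k - (c - w t) * y k"
      unfolding x_def y_def col_def by (simp add: algebra_simps)
    ultimately show "u k + w t * Y k t - c * Yt k t = x k - ip m y x / ip m y y * y k"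
      by simp
  qed
  then have "vnorm m (snd (ord_align_steps m n Y Yt w (Suc t))) \<le> vnorm m x"
    unfolding e using S proj_contract[of m y x] S_def by simp
  also have "\<dots> \<le> vnorm m u + vnorm m (\<lambda>k. w t * (Y k t - Yt k t))"
    unfolding x_def by (rule vnorm_triangle)
  also have "\<dots> = vnorm m u + \<bar>w t\<bar> * vnorm m (\<lambda>k. Y k t - Yt k t)"
    by (simp add: vnorm_scale)
  also have "\<dots> \<le> (\<Sum>l<t. \<bar>w l\<bar> * vnorm m (\<lambda>k. Y k l - Yt k l)) + \<bar>w t\<bar> * vnorm m (\<lambda>k. Y k t - Yt k t)"
    using Suc.IH Suc.prems st by simp
  finally show ?case by simp
qed

lemma oa_pass:
  assumes nz: "\<forall>j<n. ip m (col Yt j) (col Yt j) > 0" and s: "s \<ge> 1"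
  shows "t \<le> n \<Longrightarrow> k < m \<Longrightarrow> snd (ord_align_steps m n Y Yt w (s * n + t)) k
           = mv m (prod_proj m Yt t) (snd (ord_align_steps m n Y Yt w (s * n))) k"
proof (induction t arbitrary: k)
  case 0
  then show ?case by (simp add: mv_id)
next
  case (Suc t)
  have t: "t < n" using Suc.prems by simp
  obtain wt u where st: "ord_align_steps m n Y Yt w (s * n + t) = (wt, u)" by force
  define y where "y = col Yt t"
  define S where "S = ip m y y"
  have S: "S > 0" using nz t unfolding S_def y_def by auto
  have "n \<le> s * n" using s by simp
  then have nle: "\<not> s * n + t < n" by linarith
  have md: "(s * n + t) mod n = t" "t mod n = t" using t by simp_all
  define v where "v = (\<lambda>k. u k - w t * Y k t + wt t * Yt k t)"
  define c where "c = (\<Sum>k<m. Yt k t * (v k + w t * Y k t)) / (\<Sum>k<m. (Yt k t)\<^sup>2)"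
  have e: "snd (ord_align_steps m n Y Yt w (Suc (s * n + t))) = (\<lambda>k. v k + w t * Y k t - c * Yt k t)"
    using nle by (simp add: st Let_def c_def v_def md)
  have c: "c = ip m y u / S + wt t"
  proof -
    have "(\<Sum>k<m. Yt k t * (v k + w t * Y k t)) = (\<Sum>k<m. Yt k t * u k + wt t * (Yt k t * Yt k t))"
      by (intro sum.cong) (auto simp: v_def algebra_simps)
    also have "\<dots> = ip m y u + wt t * S"
      by (simp add: sum.distrib sum_distrib_left ip_def S_def y_def col_def)
    finally have "(\<Sum>k<m. Yt k t * (v k + w t * Y k t)) = ip m y u + wt t * S" .
    then have "c = (ip m y u + wt t * S) / S" unfolding c_def ip_col by (simp add: S_def y_def)
    then show ?thesis using S by (simp add: add_divide_distrib)
  qed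
  have "snd (ord_align_steps m n Y Yt w (s * n + Suc t)) k = v k + w t * Y k t - c * Yt k t"
    using e by simp
  also have "\<dots> = u k - (c - wt t) * Yt k t" by (simp add: v_def algebra_simps)
  also have "\<dots> = u k - ip m y u / ip m y y * y k" by (simp add: c S_def y_def col_def)
  also have "\<dots> = mv m (proj_perp m y) u k" using Suc.prems by (simp add: mv_proj)
  also have "mv m (proj_perp m y) u = mv m (proj_perp m y) (mv m (prod_proj m Yt t) (snd (ord_align_steps m n Y Yt w (s * n))))"
  proof (rule mv_cong)
    fix k' assume "k' < m"
    then show "u k' = mv m (prod_proj m Yt t) (snd (ord_align_steps m n Y Yt w (s * n))) k'"
      using Suc.IH[of k'] t st by simp
  qed
  also have "\<dots> = mv m (prod_proj m Yt (Suc t)) (snd (ord_align_steps m n Y Yt w (s * n)))"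
    by (simp add: mv_matmul y_def)
  finally show ?case .
qed

lemma oa_main:
  assumes n: "n > 0" and r: "r \<ge> 1"
    and nz: "\<forall>j<n. ip m (col Yt j) (col Yt j) > 0"
    and Wm: "\<forall>l<n. \<bar>w l\<bar> \<le> Wm"
    and D: "\<forall>l<n. vnorm m (\<lambda>k. Y k l - Yt k l) \<le> D"
  shows "vnorm m (\<lambda>k. (\<Sum>l<n. Y k l * w l) - (\<Sum>l<n. Yt k l * ord_align r m n Y Yt w l))
           \<le> opnorm2 m (prod_proj m Yt n) ^ (r - 1) * (real n * Wm * D)"
proof -
  define U where "U = (\<lambda>s. snd (ord_align_steps m n Y Yt w (s * n)))"
  define op where "op = opnorm2 m (prod_proj m Yt n)"
  have op: "op \<ge> 0" unfolding op_def by (rule opnorm_nonneg)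
  have U1: "vnorm m (U 1) \<le> real n * Wm * D"
  proof -
    have "vnorm m (U 1) \<le> (\<Sum>l<n. \<bar>w l\<bar> * vnorm m (\<lambda>k. Y k l - Yt k l))"
      unfolding U_def using oa_first[OF nz, of n Y w] by simp
    also have "\<dots> \<le> (\<Sum>l<n. Wm * D)"
      using Wm D by (intro sum_mono mult_mono) (auto simp: vnorm_nonneg order.trans[OF abs_ge_zero])
    finally show ?thesis by simp
  qed
  have Us: "vnorm m (U (Suc s)) \<le> op ^ s * (real n * Wm * D)" for s
  proof (induction s)
    case 0
    then show ?case using U1 by simp
  next
    case (Suc s)
    have "vnorm m (U (Suc (Suc s))) = vnorm m (mv m (prod_proj m Yt n) (U (Suc s)))"
    proof (rule vnorm_cong)
      fix k assume "k < m"
      then show "U (Suc (Suc s)) k = mv m (prod_proj m Yt n) (U (Suc s)) k"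
        unfolding U_def using oa_pass[OF nz, of "Suc s" n k Y w] by (simp add: add.commute)
    qed
    also have "\<dots> \<le> op * vnorm m (U (Suc s))" unfolding op_def by (rule opnorm_bound)
    also have "\<dots> \<le> op * (op ^ s * (real n * Wm * D))" using Suc.IH op by (intro mult_left_mono) auto
    finally show ?case by simp
  qed
  have "snd (ord_align_steps m n Y Yt w (r * n))
      = (\<lambda>k. \<Sum>l<n. Y k l * w l - Yt k l * ord_align r m n Y Yt w l)"
  proof -
    have "min (r * n) n = n" using r by simp
    then show ?thesis using oa_inv[OF n, of m Y Yt w "r * n"] unfolding ord_align_def by simp
  qed
  then have "vnorm m (\<lambda>k. (\<Sum>l<n. Y k l * w l) - (\<Sum>l<n. Yt k l * ord_align r m n Y Yt w l)) = vnorm m (U r)"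
    unfolding U_def by (simp add: sum_subtractf)
  also have "\<dots> \<le> op ^ (r - 1) * (real n * Wm * D)" using Us[of "r - 1"] r by simp
  finally show ?thesis unfolding op_def .
qed

lemma relu_lip: "\<bar>relu a - relu b\<bar> \<le> \<bar>a - b\<bar>"
  unfolding relu_def by (cases "0 \<le> a"; cases "0 \<le> b") (auto simp: max_def)

definition Dq where
  "Dq m N W Q X i = max_col_norm m (N i) (\<lambda>k l. fwd m N W X i k l - fwd m N Q X i k l)"

lemma max_col_norm_le:
  assumes "n > 0" "\<And>j. j < n \<Longrightarrow> vnorm m (col A j) \<le> B"
  shows "max_col_norm m n A \<le> B"
  unfolding max_col_norm_def using assms by (subst Max_le_iff) auto

lemma max_col_norm_nonneg: "n > 0 \<Longrightarrow> max_col_norm m n A \<ge> 0"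
  using max_col_norm_ge[of 0 n m A] vnorm_nonneg[of m "col A 0"] by linarith

lemma layer_err:
  assumes Ni1: "N (Suc i) > 0"
    and nb: "Q \<notin> bad_net \<delta> m N W X al p i"
    and E: "\<forall>j<N (Suc i). vnorm m (\<lambda>k. (\<Sum>l<N i. fwd m N W X i k l * W (Suc i) l j)
              - (\<Sum>l<N i. fwd m N Q X i k l * al (N i) (fwd m N W X i) (fwd m N Q X i) (col (W (Suc i)) j) l)) \<le> E"
  shows "Dq m N W Q X (Suc i) \<le> E + thr \<delta> p m (N i) (fwd m N Q X i)"
  unfolding Dq_def
proof (rule max_col_norm_le[OF Ni1])
  fix j assume j: "j < N (Suc i)"
  let ?Y = "fwd m N W X i" and ?Yt = "fwd m N Q X i"
  let ?a = "al (N i) ?Y ?Yt (col (W (Suc i)) j)"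
  define e1 where "e1 = (\<lambda>k. (\<Sum>l<N i. ?Y k l * W (Suc i) l j) - (\<Sum>l<N i. ?Yt k l * ?a l))"
  define e2 where "e2 = (\<lambda>k. \<Sum>l<N i. ?Yt k l * (?a l - Q (Suc i) l j))"
  have nb2: "\<not> thr \<delta> p m (N i) ?Yt < vnorm m e2"
    using nb j unfolding bad_net_def layer_bad_def e2_def by auto
  have "vnorm m (col (\<lambda>k l. fwd m N W X (Suc i) k l - fwd m N Q X (Suc i) k l) j)
      \<le> vnorm m (\<lambda>k. e1 k + e2 k)"
  proof (rule vnorm_mono_abs)
    fix k
    have "e1 k + e2 k = (\<Sum>l<N i. ?Y k l * W (Suc i) l j) - (\<Sum>l<N i. ?Yt k l * Q (Suc i) l j)"
      unfolding e1_def e2_def by (simp add: right_diff_distrib sum_subtractf)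
    then show "\<bar>col (\<lambda>k l. fwd m N W X (Suc i) k l - fwd m N Q X (Suc i) k l) j k\<bar> \<le> \<bar>e1 k + e2 k\<bar>"
      unfolding col_def using relu_lip by simp
  qed
  also have "\<dots> \<le> vnorm m e1 + vnorm m e2" by (rule vnorm_triangle)
  also have "\<dots> \<le> E + thr \<delta> p m (N i) ?Yt"
    using E j nb2 unfolding e1_def by (intro add_mono) auto
  finally show "vnorm m (col (\<lambda>k l. fwd m N W X (Suc i) k l - fwd m N Q X (Suc i) k l) j)
      \<le> E + thr \<delta> p m (N i) ?Yt" .
qed

lemma At_le:
  assumes "N i > 0"
  shows "max_col_norm m (N i) (fwd m N Q X i) \<le> max_col_norm m (N i) (fwd m N W X i) + Dq m N W Q X i"
proof (rule max_col_norm_le[OF assms])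
  fix j assume j: "j < N i"
  have "vnorm m (col (fwd m N Q X i) j)
     = vnorm m (\<lambda>k. col (fwd m N W X i) j k + (- col (\<lambda>k l. fwd m N W X i k l - fwd m N Q X i k l) j k))"
    by (simp add: col_def)
  also have "\<dots> \<le> vnorm m (col (fwd m N W X i) j) + vnorm m (\<lambda>k. - col (\<lambda>k l. fwd m N W X i k l - fwd m N Q X i k l) j k)"
    by (rule vnorm_triangle)
  also have "\<dots> \<le> max_col_norm m (N i) (fwd m N W X i) + Dq m N W Q X i"
    unfolding vnorm_minus Dq_def using j by (intro add_mono max_col_norm_ge)
  finally show "vnorm m (col (fwd m N Q X i) j) \<le> max_col_norm m (N i) (fwd m N W X i) + Dq m N W Q X i" .
qed

lemma Dq0: "N 0 > 0 \<Longrightarrow> Dq m N W Q X 0 = 0"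
proof -
  assume n: "N 0 > 0"
  have "Dq m N W Q X 0 \<le> 0" unfolding Dq_def
    by (rule max_col_norm_le[OF n]) (simp add: col_def vnorm_def)
  moreover have "Dq m N W Q X 0 \<ge> 0" unfolding Dq_def by (rule max_col_norm_nonneg[OF n])
  ultimately show ?thesis by simp
qed

lemma net_err_Dq: "net_err m N W Q X L = Dq m N W Q X L"
  unfolding net_err_def Dq_def max_col_norm_def col_def ..

lemma thr_eq: "thr \<delta> p m n Yt = \<delta> * sqrt (2 * pi * real p * real m * ln (real n)) * max_col_norm m n Yt"
  unfolding thr_def ..

lemma sum_shift1: "(\<Sum>i\<in>{1..L}. f i) = (\<Sum>i<L. f (Suc i) :: real)"
  by (induction L) (simp_all add: sum.cl_ivl_Suc)

lemma prob_good:
  fixes L :: nat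
  assumes "\<forall>Q\<in>set_pmf M. Q \<notin> G \<longrightarrow> (\<exists>i<L. Q \<in> B i)"
  shows "measure_pmf.prob M G \<ge> 1 - (\<Sum>i<L. measure_pmf.prob M (B i))"
proof -
  have "measure_pmf.prob M (UNIV - G) = measure_pmf.prob M ((UNIV - G) \<inter> set_pmf M)"
    by (simp add: measure_Int_set_pmf)
  also have "\<dots> \<le> measure_pmf.prob M (\<Union>i<L. B i)"
    using assms by (intro measure_pmf.finite_measure_mono) auto
  also have "\<dots> \<le> (\<Sum>i<L. measure_pmf.prob M (B i))"
    by (rule measure_pmf.finite_measure_subadditive_finite) auto
  finally have "measure_pmf.prob M (UNIV - G) \<le> (\<Sum>i<L. measure_pmf.prob M (B i))" .
  moreover have "measure_pmf.prob M (UNIV - G) = 1 - measure_pmf.prob M G"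
    using measure_pmf.prob_compl[of G M] by simp
  ultimately show ?thesis by simp
qed

lemma max_abs_ge: "k < a \<Longrightarrow> l < b \<Longrightarrow> \<bar>A k l\<bar> \<le> max_abs a b A"
  unfolding max_abs_def by (rule Max_ge) force+

lemma max_abs_nonneg: "0 < a \<Longrightarrow> 0 < b \<Longrightarrow> max_abs a b A \<ge> 0"
  using max_abs_ge[of 0 a 0 b A] by linarith

lemma Ta_Suc:
  fixes \<delta> :: real and A :: "nat \<Rightarrow> real" and p m :: nat and N :: "nat \<Rightarrow> nat"
  assumes d: "\<delta> > 0"
  defines "\<kappa> \<equiv> 2 * pi * real p * real m * \<delta>\<^sup>2"
  shows "(\<Sum>j<Suc i. \<kappa> powr (real (Suc i - j) / 2) * sqrt (\<Prod>k\<in>{j..<Suc i}. ln (real (N k))) * A j)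
       = \<delta> * sqrt (2 * pi * real p * real m * ln (real (N i)))
         * (A i + (\<Sum>j<i. \<kappa> powr (real (i - j) / 2) * sqrt (\<Prod>k\<in>{j..<i}. ln (real (N k))) * A j))"
proof -
  define c where "c = \<delta> * sqrt (2 * pi * real p * real m * ln (real (N i)))"
  have kap: "\<kappa> \<ge> 0" unfolding \<kappa>_def by simp
  have c: "\<kappa> powr (1/2) * sqrt (ln (real (N i))) = c"
  proof -
    have "\<kappa> powr (1/2) = sqrt \<kappa>" using kap by (simp add: powr_half_sqrt)
    also have "sqrt \<kappa> = \<delta> * sqrt (2 * pi * real p * real m)"
      unfolding \<kappa>_def using d by (simp add: real_sqrt_mult mult.commute)
    finally show ?thesis unfolding c_def by (simp add: real_sqrt_mult mult.assoc)
  qed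
  have tm: "\<kappa> powr (real (Suc i - j) / 2) * sqrt (\<Prod>k\<in>{j..<Suc i}. ln (real (N k))) * A j
      = c * (\<kappa> powr (real (i - j) / 2) * sqrt (\<Prod>k\<in>{j..<i}. ln (real (N k))) * A j)" if j: "j < i" for j
  proof -
    have "real (Suc i - j) / 2 = 1/2 + real (i - j) / 2" using j by (simp add: of_nat_diff field_simps)
    then have "\<kappa> powr (real (Suc i - j) / 2) = \<kappa> powr (1/2 + real (i - j) / 2)"
      by (rule arg_cong[where f="\<lambda>x. \<kappa> powr x"])
    also have "\<dots> = \<kappa> powr (1/2) * \<kappa> powr (real (i - j) / 2)" by (rule powr_add)
    finally have "\<kappa> powr (real (Suc i - j) / 2) = \<kappa> powr (1/2) * \<kappa> powr (real (i - j) / 2)" .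
    moreover have "(\<Prod>k\<in>{j..<Suc i}. ln (real (N k))) = (\<Prod>k\<in>{j..<i}. ln (real (N k))) * ln (real (N i))"
      using j by (simp add: prod.atLeastLessThan_Suc)
    ultimately show ?thesis using c[symmetric] by (simp add: real_sqrt_mult ac_simps)
  qed
  have last: "\<kappa> powr (real (Suc i - i) / 2) * sqrt (\<Prod>k\<in>{i..<Suc i}. ln (real (N k))) * A i = c * A i"
    using c by simp
  have "(\<Sum>j<Suc i. \<kappa> powr (real (Suc i - j) / 2) * sqrt (\<Prod>k\<in>{j..<Suc i}. ln (real (N k))) * A j)
      = (\<Sum>j<i. c * (\<kappa> powr (real (i - j) / 2) * sqrt (\<Prod>k\<in>{j..<i}. ln (real (N k))) * A j)) + c * A i"
  proof -
    have "(\<Sum>j<i. \<kappa> powr (real (Suc i - j) / 2) * sqrt (\<Prod>k\<in>{j..<Suc i}. ln (real (N k))) * A j)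
        = (\<Sum>j<i. c * (\<kappa> powr (real (i - j) / 2) * sqrt (\<Prod>k\<in>{j..<i}. ln (real (N k))) * A j))"
      by (rule sum.cong[OF refl], rule tm) simp
    then show ?thesis by (simp only: sum.lessThan_Suc last)
  qed
  also have "\<dots> = c * (A i + (\<Sum>j<i. \<kappa> powr (real (i - j) / 2) * sqrt (\<Prod>k\<in>{j..<i}. ln (real (N k))) * A j))"
    by (simp add: sum_distrib_left algebra_simps)
  finally show ?thesis unfolding c_def .
qed

lemma Tb_Suc:
  fixes c A B :: "nat \<Rightarrow> real"
  shows "(\<Sum>j<Suc i. c j * A j * (\<Prod>k\<in>{j+1..<Suc i}. B k + c k))
       = c i * A i + (B i + c i) * (\<Sum>j<i. c j * A j * (\<Prod>k\<in>{j+1..<i}. B k + c k))"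
proof -
  have tm: "c j * A j * (\<Prod>k\<in>{j+1..<Suc i}. B k + c k) = (B i + c i) * (c j * A j * (\<Prod>k\<in>{j+1..<i}. B k + c k))"
    if "j < i" for j
    using that by (simp add: prod.atLeastLessThan_Suc ac_simps)
  have "(\<Sum>j<Suc i. c j * A j * (\<Prod>k\<in>{j+1..<Suc i}. B k + c k))
      = (\<Sum>j<i. (B i + c i) * (c j * A j * (\<Prod>k\<in>{j+1..<i}. B k + c k))) + c i * A i"
  proof -
    have "(\<Sum>j<i. c j * A j * (\<Prod>k\<in>{j+1..<Suc i}. B k + c k))
        = (\<Sum>j<i. (B i + c i) * (c j * A j * (\<Prod>k\<in>{j+1..<i}. B k + c k)))"
      by (rule sum.cong[OF refl], rule tm) simp
    then show ?thesis by simp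
  qed
  also have "\<dots> = c i * A i + (B i + c i) * (\<Sum>j<i. c j * A j * (\<Prod>k\<in>{j+1..<i}. B k + c k))"
    by (simp add: sum_distrib_left)
  finally show ?thesis .
qed

theorem mainTheorem5:
  fixes m L r p :: nat and N :: "nat \<Rightarrow> nat" and W :: "nat \<Rightarrow> mat" and X :: mat
    and \<delta> :: real and sel :: "nat \<Rightarrow> mat \<Rightarrow> mat \<Rightarrow> vec \<Rightarrow> vec"
  assumes dims: "\<forall>i\<le>L. N i > 0"
    and delta: "\<delta> > 0"
  shows
  "((\<forall>n Y Yt w. (\<exists>z. align_feasible m n Y Yt w z) \<longrightarrow> perfect_aligned m n Y Yt w (sel n Y Yt w))
     \<and> (\<forall>Q\<in>set_pmf (qnet \<delta> m N W X sel L). \<forall>i<L.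
          nonzero_cols m (N i) (fwd m N Q X i) \<and>
          (\<forall>j<N (Suc i). \<exists>z. align_feasible m (N i) (fwd m N W X i) (fwd m N Q X i) (col (W (Suc i)) j) z))
   \<longrightarrow> measure_pmf.prob (qnet \<delta> m N W X sel L)
        {Q. net_err m N W Q X L \<le>
            (\<Sum>i<L. (2 * pi * real p * real m * \<delta>\<^sup>2) powr (real (L - i) / 2)
                     * sqrt (\<Prod>k\<in>{i..<L}. ln (real (N k)))
                     * max_col_norm m (N i) (fwd m N W X i))}
      \<ge> 1 - (\<Sum>i\<in>{1..L}. sqrt 2 * real m * real (N i) / real (N (i - 1)) ^ p))
  \<and>
  ((r \<ge> 1 \<and> (\<forall>Q\<in>set_pmf (qnet \<delta> m N W X (ord_align r m) L). \<forall>i<L.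
          nonzero_cols m (N i) (fwd m N Q X i)))
   \<longrightarrow> measure_pmf.prob (qnet \<delta> m N W X (ord_align r m) L)
        {Q. net_err m N W Q X L \<le>
            (\<Sum>i<L. \<delta> * sqrt (2 * pi * real p * real m * ln (real (N i)))
                     * max_col_norm m (N i) (fwd m N W X i)
                     * (\<Prod>k\<in>{i+1..<L}.
                          real (N k) * max_abs (N k) (N (Suc k)) (W (Suc k))
                            * opnorm2 m (prod_proj m (fwd m N Q X k) (N k)) ^ (r - 1)
                          + \<delta> * sqrt (2 * pi * real p * real m * ln (real (N k)))))}
      \<ge> 1 - (\<Sum>i\<in>{1..L}. sqrt 2 * real m * real (N i) / real (N (i - 1)) ^ p))"
proof -
  have pos: "\<And>i. i \<le> L \<Longrightarrow> N i > 0" using dims by auto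
  have lnn: "\<And>i. i \<le> L \<Longrightarrow> ln (real (N i)) \<ge> 0" using pos by (simp add: Suc_leI)
  define A where "A i = max_col_norm m (N i) (fwd m N W X i)" for i
  define c where "c i = \<delta> * sqrt (2 * pi * real p * real m * ln (real (N i)))" for i
  have c0: "\<And>i. i \<le> L \<Longrightarrow> c i \<ge> 0" unfolding c_def using delta lnn by simp
  have thrc: "\<And>i Yt. thr \<delta> p m (N i) Yt = c i * max_col_norm m (N i) Yt" unfolding thr_def c_def ..
  have rec: "Dq m N W Q X (Suc i) \<le> E + c i * (A i + Dq m N W Q X i)"
    if i: "i < L" and nb: "Q \<notin> bad_net \<delta> m N W X al p i"
      and E: "\<forall>j<N (Suc i). vnorm m (\<lambda>k. (\<Sum>l<N i. fwd m N W X i k l * W (Suc i) l j)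
              - (\<Sum>l<N i. fwd m N Q X i k l * al (N i) (fwd m N W X i) (fwd m N Q X i) (col (W (Suc i)) j) l)) \<le> E"
    for i Q al E
  proof -
    have "Dq m N W Q X (Suc i) \<le> E + thr \<delta> p m (N i) (fwd m N Q X i)"
      by (rule layer_err[OF _ nb E]) (use pos i in auto)
    also have "thr \<delta> p m (N i) (fwd m N Q X i) \<le> c i * (A i + Dq m N W Q X i)"
      unfolding thrc A_def using At_le[of N i m Q X W] pos[of i] c0[of i] i by (intro mult_left_mono) auto
    finally show ?thesis by simp
  qed
  have bound_sum: "(\<Sum>i<L. measure_pmf.prob (qnet \<delta> m N W X al L) (bad_net \<delta> m N W X al p i))
      \<le> (\<Sum>i\<in>{1..L}. sqrt 2 * real m * real (N i) / real (N (i - 1)) ^ p)"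
    if nz: "\<forall>Q\<in>set_pmf (qnet \<delta> m N W X al L). \<forall>i<L. nonzero_cols m (N i) (fwd m N Q X i)" for al
  proof -
    have "(\<Sum>i<L. measure_pmf.prob (qnet \<delta> m N W X al L) (bad_net \<delta> m N W X al p i))
        \<le> (\<Sum>i<L. real (N (Suc i)) * (sqrt 2 * real m / real (N i) ^ p))"
      using nz pos by (intro sum_mono net_layer_prob[OF delta]) auto
    also have "\<dots> = (\<Sum>i\<in>{1..L}. sqrt 2 * real m * real (N i) / real (N (i - 1)) ^ p)"
      unfolding sum_shift1 by (simp add: ac_simps)
    finally show ?thesis .
  qed
  show ?thesis
  proof (intro conjI impI)
    assume H: "(\<forall>n Y Yt w. (\<exists>z. align_feasible m n Y Yt w z) \<longrightarrow> perfect_aligned m n Y Yt w (sel n Y Yt w))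
     \<and> (\<forall>Q\<in>set_pmf (qnet \<delta> m N W X sel L). \<forall>i<L.
          nonzero_cols m (N i) (fwd m N Q X i) \<and>
          (\<forall>j<N (Suc i). \<exists>z. align_feasible m (N i) (fwd m N W X i) (fwd m N Q X i) (col (W (Suc i)) j) z))"
    let ?M = "qnet \<delta> m N W X sel L"
    define Ta where "Ta i = (\<Sum>j<i. (2 * pi * real p * real m * \<delta>\<^sup>2) powr (real (i - j) / 2)
                     * sqrt (\<Prod>k\<in>{j..<i}. ln (real (N k))) * A j)" for i
    have det: "\<forall>Q\<in>set_pmf ?M. Q \<notin> {Q. net_err m N W Q X L \<le> Ta L} \<longrightarrow> (\<exists>i<L. Q \<in> bad_net \<delta> m N W X sel p i)"
    proof (intro ballI impI)
      fix Q assume Q: "Q \<in> set_pmf ?M" and nQ: "Q \<notin> {Q. net_err m N W Q X L \<le> Ta L}"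
      show "\<exists>i<L. Q \<in> bad_net \<delta> m N W X sel p i"
      proof (rule ccontr)
        assume "\<not> (\<exists>i<L. Q \<in> bad_net \<delta> m N W X sel p i)"
        then have nb: "\<And>i. i < L \<Longrightarrow> Q \<notin> bad_net \<delta> m N W X sel p i" by auto
        have "i \<le> L \<Longrightarrow> Dq m N W Q X i \<le> Ta i" for i
        proof (induction i)
          case 0
          then show ?case using Dq0[of N m W Q X] pos[of 0] by (simp add: Ta_def)
        next
          case (Suc i)
          then have i: "i < L" by simp
          have E: "\<forall>j<N (Suc i). vnorm m (\<lambda>k. (\<Sum>l<N i. fwd m N W X i k l * W (Suc i) l j)
              - (\<Sum>l<N i. fwd m N Q X i k l * sel (N i) (fwd m N W X i) (fwd m N Q X i) (col (W (Suc i)) j) l)) \<le> 0"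
          proof (intro allI impI)
            fix j assume j: "j < N (Suc i)"
            let ?w = "col (W (Suc i)) j"
            have "\<exists>z. align_feasible m (N i) (fwd m N W X i) (fwd m N Q X i) ?w z"
              using H Q i j by blast
            then have "perfect_aligned m (N i) (fwd m N W X i) (fwd m N Q X i) ?w (sel (N i) (fwd m N W X i) (fwd m N Q X i) ?w)"
              using H by blast
            then have fe: "\<forall>k<m. (\<Sum>l<N i. fwd m N Q X i k l * sel (N i) (fwd m N W X i) (fwd m N Q X i) ?w l)
                 = (\<Sum>l<N i. fwd m N W X i k l * ?w l)"
              unfolding perfect_aligned_def align_feasible_def by blast
            have "vnorm m (\<lambda>k. (\<Sum>l<N i. fwd m N W X i k l * W (Suc i) l j)
              - (\<Sum>l<N i. fwd m N Q X i k l * sel (N i) (fwd m N W X i) (fwd m N Q X i) ?w l)) = vnorm m (\<lambda>_. 0)"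
              using fe by (intro vnorm_cong) (simp add: col_def)
            then show "vnorm m (\<lambda>k. (\<Sum>l<N i. fwd m N W X i k l * W (Suc i) l j)
              - (\<Sum>l<N i. fwd m N Q X i k l * sel (N i) (fwd m N W X i) (fwd m N Q X i) ?w l)) \<le> 0"
              by (simp add: vnorm_def)
          qed
          have "Dq m N W Q X (Suc i) \<le> 0 + c i * (A i + Dq m N W Q X i)"
            by (rule rec[OF i nb[OF i] E])
          also have "\<dots> \<le> c i * (A i + Ta i)" using Suc c0[of i] i by (subst add_0_left, intro mult_left_mono) auto
          also have "\<dots> = Ta (Suc i)" unfolding Ta_def c_def by (rule Ta_Suc[OF delta, symmetric])
          finally show ?case .
        qed
        then have "net_err m N W Q X L \<le> Ta L" by (simp add: net_err_Dq)
        then show False using nQ by simp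
      qed
    qed
    have "measure_pmf.prob ?M {Q. net_err m N W Q X L \<le> Ta L}
        \<ge> 1 - (\<Sum>i<L. measure_pmf.prob ?M (bad_net \<delta> m N W X sel p i))"
      by (rule prob_good[OF det])
    moreover have "(\<Sum>i<L. measure_pmf.prob ?M (bad_net \<delta> m N W X sel p i))
      \<le> (\<Sum>i\<in>{1..L}. sqrt 2 * real m * real (N i) / real (N (i - 1)) ^ p)"
      using H by (intro bound_sum) blast
    ultimately show "measure_pmf.prob ?M
        {Q. net_err m N W Q X L \<le>
            (\<Sum>i<L. (2 * pi * real p * real m * \<delta>\<^sup>2) powr (real (L - i) / 2)
                     * sqrt (\<Prod>k\<in>{i..<L}. ln (real (N k)))
                     * max_col_norm m (N i) (fwd m N W X i))}
      \<ge> 1 - (\<Sum>i\<in>{1..L}. sqrt 2 * real m * real (N i) / real (N (i - 1)) ^ p)"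
      unfolding Ta_def A_def by simp
  next
    assume H: "r \<ge> 1 \<and> (\<forall>Q\<in>set_pmf (qnet \<delta> m N W X (ord_align r m) L). \<forall>i<L.
          nonzero_cols m (N i) (fwd m N Q X i))"
    let ?M = "qnet \<delta> m N W X (ord_align r m) L"
    define B where "B Q k = real (N k) * max_abs (N k) (N (Suc k)) (W (Suc k))
                            * opnorm2 m (prod_proj m (fwd m N Q X k) (N k)) ^ (r - 1)" for Q k
    define Tb where "Tb Q i = (\<Sum>j<i. c j * A j * (\<Prod>k\<in>{j+1..<i}. B Q k + c k))" for Q i
    have det: "\<forall>Q\<in>set_pmf ?M. Q \<notin> {Q. net_err m N W Q X L \<le> Tb Q L} \<longrightarrow> (\<exists>i<L. Q \<in> bad_net \<delta> m N W X (ord_align r m) p i)"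
    proof (intro ballI impI)
      fix Q assume Q: "Q \<in> set_pmf ?M" and nQ: "Q \<notin> {Q. net_err m N W Q X L \<le> Tb Q L}"
      show "\<exists>i<L. Q \<in> bad_net \<delta> m N W X (ord_align r m) p i"
      proof (rule ccontr)
        assume "\<not> (\<exists>i<L. Q \<in> bad_net \<delta> m N W X (ord_align r m) p i)"
        then have nb: "\<And>i. i < L \<Longrightarrow> Q \<notin> bad_net \<delta> m N W X (ord_align r m) p i" by auto
        have "i \<le> L \<Longrightarrow> Dq m N W Q X i \<le> Tb Q i" for i
        proof (induction i)
          case 0
          then show ?case using Dq0[of N m W Q X] pos[of 0] by (simp add: Tb_def)
        next
          case (Suc i)
          then have i: "i < L" by simp
          have Ni: "N i > 0" "N (Suc i) > 0" using pos i by auto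
          have Bnn: "B Q i \<ge> 0" unfolding B_def
            using max_abs_nonneg[OF Ni, of "W (Suc i)"] opnorm_nonneg by simp
          have E: "\<forall>j<N (Suc i). vnorm m (\<lambda>k. (\<Sum>l<N i. fwd m N W X i k l * W (Suc i) l j)
              - (\<Sum>l<N i. fwd m N Q X i k l * ord_align r m (N i) (fwd m N W X i) (fwd m N Q X i) (col (W (Suc i)) j) l))
              \<le> B Q i * Dq m N W Q X i"
          proof (intro allI impI)
            fix j assume j: "j < N (Suc i)"
            have nzc: "nonzero_cols m (N i) (fwd m N Q X i)" using H Q i by blast
            have "vnorm m (\<lambda>k. (\<Sum>l<N i. fwd m N W X i k l * col (W (Suc i)) j l)
              - (\<Sum>l<N i. fwd m N Q X i k l * ord_align r m (N i) (fwd m N W X i) (fwd m N Q X i) (col (W (Suc i)) j) l))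
              \<le> opnorm2 m (prod_proj m (fwd m N Q X i) (N i)) ^ (r - 1)
                  * (real (N i) * max_abs (N i) (N (Suc i)) (W (Suc i)) * Dq m N W Q X i)"
            proof (rule oa_main)
              show "N i > 0" by (rule Ni(1))
              show "r \<ge> 1" using H by simp
              show "\<forall>ja<N i. ip m (col (fwd m N Q X i) ja) (col (fwd m N Q X i) ja) > 0"
                using nonzero_col_pos[OF nzc] by (simp add: ip_col)
              show "\<forall>l<N i. \<bar>col (W (Suc i)) j l\<bar> \<le> max_abs (N i) (N (Suc i)) (W (Suc i))"
                using j by (simp add: col_def max_abs_ge)
              show "\<forall>l<N i. vnorm m (\<lambda>k. fwd m N W X i k l - fwd m N Q X i k l) \<le> Dq m N W Q X i"
                unfolding Dq_def using max_col_norm_ge[of _ "N i" m "\<lambda>k l. fwd m N W X i k l - fwd m N Q X i k l"]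
                by (simp add: col_def)
            qed
            then show "vnorm m (\<lambda>k. (\<Sum>l<N i. fwd m N W X i k l * W (Suc i) l j)
              - (\<Sum>l<N i. fwd m N Q X i k l * ord_align r m (N i) (fwd m N W X i) (fwd m N Q X i) (col (W (Suc i)) j) l))
              \<le> B Q i * Dq m N W Q X i"
              unfolding B_def by (simp add: col_def ac_simps)
          qed
          have "Dq m N W Q X (Suc i) \<le> B Q i * Dq m N W Q X i + c i * (A i + Dq m N W Q X i)"
            by (rule rec[OF i nb[OF i] E])
          also have "\<dots> = c i * A i + (B Q i + c i) * Dq m N W Q X i" by (simp add: algebra_simps)
          also have "\<dots> \<le> c i * A i + (B Q i + c i) * Tb Q i"
            using Suc Bnn c0[of i] i by (intro add_left_mono mult_left_mono) auto
          also have "\<dots> = Tb Q (Suc i)" unfolding Tb_def by (rule Tb_Suc[symmetric])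
          finally show ?case .
        qed
        then have "net_err m N W Q X L \<le> Tb Q L" by (simp add: net_err_Dq)
        then show False using nQ by simp
      qed
    qed
    have "measure_pmf.prob ?M {Q. net_err m N W Q X L \<le> Tb Q L}
        \<ge> 1 - (\<Sum>i<L. measure_pmf.prob ?M (bad_net \<delta> m N W X (ord_align r m) p i))"
      by (rule prob_good[OF det])
    moreover have "(\<Sum>i<L. measure_pmf.prob ?M (bad_net \<delta> m N W X (ord_align r m) p i))
      \<le> (\<Sum>i\<in>{1..L}. sqrt 2 * real m * real (N i) / real (N (i - 1)) ^ p)"
      using H by (intro bound_sum) blast
    ultimately show "measure_pmf.prob ?M
        {Q. net_err m N W Q X L \<le>
            (\<Sum>i<L. \<delta> * sqrt (2 * pi * real p * real m * ln (real (N i)))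
                     * max_col_norm m (N i) (fwd m N W X i)
                     * (\<Prod>k\<in>{i+1..<L}.
                          real (N k) * max_abs (N k) (N (Suc k)) (W (Suc k))
                            * opnorm2 m (prod_proj m (fwd m N Q X k) (N k)) ^ (r - 1)
                          + \<delta> * sqrt (2 * pi * real p * real m * ln (real (N k)))))}
      \<ge> 1 - (\<Sum>i\<in>{1..L}. sqrt 2 * real m * real (N i) / real (N (i - 1)) ^ p)"
      unfolding Tb_def A_def B_def c_def by simp
  qed
qed

end
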